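(* For every integer $s\ge 0$ there exists a potential $W\in\mathcal{W}_{2s+1}$ such that $C(W)\ge 2s$.
   Context: $\mathcal{W}$ is the set of even functions $W\in C^2(\mathbb{R})$ for which there is some $m>0$ with $W'(\pm m)=0$, $W'(x)>0$ for $x\in(-m,0)\cup(m,\infty)$, $W'(x)<0$ for $x\in(-\infty,-m)\cup(0,m)$, and $\lim_{x\to\pm\infty}W(x)/x^2=\infty$. $\mathcal{W}_s\subseteq\mathcal{W}$ consists of those $W$ having exactly $s$ inflection points in the interval between $x=0$ and $x=m$. For a weighted graph $G$ on vertices $\{1,\dots,n\}$ with symmetric real weights $\gamma_{ij}=\gamma_{ji}$ (possibly negative), and $\kappa\ge0$, let $E_{W,G,\kappa}(x)=\sum_{i=1}^nW(x_i)+\frac{\kappa}{2}\sum_{i,j=1}^n\gamma_{ij}(x_i-x_j)^2$ on $\mathbb{R}^n$, and let $m(W,G,\kappa)$ be the number of local minima of $E_{W,G,\kappa}$. Define $C(G,W)=\sup_{\kappa\ge0}\{m(W,G,\kappa)-m(W,G,0)\}$ and $C(W)=\inf_{G\in\mathcal{G}}C(G,W)$, where $\mathcal{G}$ is the set of all connected weighted graphs (connected meaning the graph of pairs $\{i,j\}$ with $\gamma_{ij}\ne0$ is connected) with at least two vertices, over all numbers of vertices $n$. *)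

theory Defs
  imports "HOL-Analysis.Analysis"
begin

definition C2 :: "(real \<Rightarrow> real) \<Rightarrow> bool" where
  "C2 W \<longleftrightarrow> (\<forall>x. W differentiable (at x)) \<and> (\<forall>x. deriv W differentiable (at x))
      \<and> continuous_on UNIV (deriv (deriv W))"

definition inflection_point :: "(real \<Rightarrow> real) \<Rightarrow> real \<Rightarrow> bool" where
  "inflection_point W x \<longleftrightarrow> (\<exists>d>0.
     ((\<forall>y\<in>{x-d<..<x}. deriv (deriv W) y > 0) \<and> (\<forall>y\<in>{x<..<x+d}. deriv (deriv W) y < 0)) \<or>
     ((\<forall>y\<in>{x-d<..<x}. deriv (deriv W) y < 0) \<and> (\<forall>y\<in>{x<..<x+d}. deriv (deriv W) y > 0)))"

definition well_potential_at :: "(real \<Rightarrow> real) \<Rightarrow> real \<Rightarrow> bool" where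
  "well_potential_at W m \<longleftrightarrow> m > 0 \<and> C2 W \<and> (\<forall>x. W (-x) = W x) \<and>
     deriv W m = 0 \<and> deriv W (-m) = 0 \<and>
     (\<forall>x. (x \<in> {-m<..<0} \<or> x > m) \<longrightarrow> deriv W x > 0) \<and>
     (\<forall>x. (x < -m \<or> x \<in> {0<..<m}) \<longrightarrow> deriv W x < 0) \<and>
     filterlim (\<lambda>x. W x / x^2) at_top at_top \<and>
     filterlim (\<lambda>x. W x / x^2) at_top at_bot"

definition Wclass :: "(real \<Rightarrow> real) set" where
  "Wclass = {W. \<exists>m. well_potential_at W m}"

definition Wclass_s :: "nat \<Rightarrow> (real \<Rightarrow> real) set" where
  "Wclass_s s = {W. \<exists>m. well_potential_at W m \<and>
       finite {x\<in>{0<..<m}. inflection_point W x} \<and>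
       card {x\<in>{0<..<m}. inflection_point W x} = s}"

text \<open>Graphs on vertices {1..n}, weights gamma (only values on {1..n} matter).
  Points of R^n are functions nat => real vanishing outside {1..n}.\<close>
definition pts :: "nat \<Rightarrow> (nat \<Rightarrow> real) set" where
  "pts n = {x. \<forall>i. i \<notin> {1..n} \<longrightarrow> x i = 0}"

definition energy :: "(real \<Rightarrow> real) \<Rightarrow> nat \<Rightarrow> (nat \<Rightarrow> nat \<Rightarrow> real) \<Rightarrow> real \<Rightarrow> (nat \<Rightarrow> real) \<Rightarrow> real" where
  "energy W n \<gamma> \<kappa> x = (\<Sum>i=1..n. W (x i)) +
     \<kappa> / 2 * (\<Sum>i=1..n. \<Sum>j=1..n. \<gamma> i j * (x i - x j)^2)"

definition is_local_min :: "nat \<Rightarrow> ((nat \<Rightarrow> real) \<Rightarrow> real) \<Rightarrow> (nat \<Rightarrow> real) \<Rightarrow> bool" where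
  "is_local_min n E x \<longleftrightarrow> x \<in> pts n \<and> (\<exists>e>0. \<forall>y\<in>pts n.
      (\<forall>i\<in>{1..n}. \<bar>y i - x i\<bar> < e) \<longrightarrow> E x \<le> E y)"

definition num_min :: "(real \<Rightarrow> real) \<Rightarrow> nat \<Rightarrow> (nat \<Rightarrow> nat \<Rightarrow> real) \<Rightarrow> real \<Rightarrow> ereal" where
  "num_min W n \<gamma> \<kappa> = (let S = {x. is_local_min n (energy W n \<gamma> \<kappa>) x} in
      if finite S then ereal (real (card S)) else \<infinity>)"

definition connected_weighted :: "nat \<Rightarrow> (nat \<Rightarrow> nat \<Rightarrow> real) \<Rightarrow> bool" where
  "connected_weighted n \<gamma> \<longleftrightarrow> (\<forall>i\<in>{1..n}. \<forall>j\<in>{1..n}.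
      (i, j) \<in> {(a, b). a \<in> {1..n} \<and> b \<in> {1..n} \<and> a \<noteq> b \<and> \<gamma> a b \<noteq> 0}\<^sup>*)"

definition graphs :: "(nat \<times> (nat \<Rightarrow> nat \<Rightarrow> real)) set" where
  "graphs = {(n, \<gamma>). n \<ge> 2 \<and> (\<forall>i\<in>{1..n}. \<forall>j\<in>{1..n}. \<gamma> i j = \<gamma> j i) \<and> connected_weighted n \<gamma>}"

definition C_graph :: "nat \<Rightarrow> (nat \<Rightarrow> nat \<Rightarrow> real) \<Rightarrow> (real \<Rightarrow> real) \<Rightarrow> ereal" where
  "C_graph n \<gamma> W = (SUP \<kappa>\<in>{0..}. num_min W n \<gamma> \<kappa> - num_min W n \<gamma> 0)"

definition C_pot :: "(real \<Rightarrow> real) \<Rightarrow> ereal" where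
  "C_pot W = (INF g\<in>graphs. C_graph (fst g) (snd g) W)"

end

theory Submission
  imports Defs "HOL-Real_Asymp.Real_Asymp"
begin
lemma antideriv_exists:
  fixes h :: "real \<Rightarrow> real"
  assumes hc: "continuous_on UNIV h"
  shows "\<exists>F. F 0 = 0 \<and> (\<forall>x. (F has_real_derivative h x) (at x))"
proof -
  define F where "F x = integral {0..x} h - integral {x..0} h" for x
  have "(F has_real_derivative h x) (at x)" for x
  proof -
    define a where "a = min x 0 - 1"
    define b where "b = max x 0 + 1"
    have ab: "a < x" "x < b" "a < 0" "0 < b" unfolding a_def b_def by auto
    have int: "h integrable_on {c..d}" for c d
      by (rule integrable_continuous_real) (use hc continuous_on_subset in blast)
    have eq: "F y = integral {a..y} h - integral {a..0} h" if "y \<in> {a<..<b}" for y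
    proof (cases "0 \<le> y")
      case True
      have "integral {a..0} h + integral {0..y} h = integral {a..y} h"
        using Henstock_Kurzweil_Integration.integral_combine[where a=a and c=0 and b=y and f=h] ab True that int by auto
      moreover have "integral {y..0} h = 0"
        using True by (cases "y = 0") auto
      ultimately show ?thesis unfolding F_def by linarith
    next
      case False
      have "integral {a..y} h + integral {y..0} h = integral {a..0} h"
        using Henstock_Kurzweil_Integration.integral_combine[where a=a and c=y and b=0 and f=h] ab False that int by auto
      moreover have "integral {0..y} h = 0"
        using False by auto
      ultimately show ?thesis unfolding F_def by linarith
    qed
    have d1: "((\<lambda>y. integral {a..y} h) has_real_derivative h x) (at x within {a..b})"
      by (rule integral_has_real_derivative) (use hc continuous_on_subset ab in auto)
    have "at x within {a..b} = at x"
      by (rule at_within_interior) (use ab in auto)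
    with d1 have d2: "((\<lambda>y. integral {a..y} h - integral {a..0} h) has_real_derivative h x) (at x)"
      by (auto intro!: derivative_eq_intros)
    show ?thesis
      by (rule has_field_derivative_transform_within_open[OF d2, of "{a<..<b}"]) (use ab eq in auto)
  qed
  moreover have "F 0 = 0" unfolding F_def by simp
  ultimately show ?thesis by blast
qed

lemma sin_shift_npi: "sin (x + real n * pi) = (-1)^n * sin x"
proof (induction n)
  case (Suc n)
  have "sin (x + real (Suc n) * pi) = sin ((x + real n * pi) + pi)" by (simp add: algebra_simps)
  then show ?case using Suc by simp
qed simp

lemma cos_shift_npi: "cos (x + real n * pi) = (-1)^n * cos x"
proof (induction n)
  case (Suc n)
  have "cos (x + real (Suc n) * pi) = cos ((x + real n * pi) + pi)" by (simp add: algebra_simps)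
  then show ?case using Suc by simp
qed simp

lemma sin_cos_pos_same:
  fixes j :: nat
  assumes "real j < y" "y < real j + 1" "real j - 1/2 < z" "z < real j + 1/2"
  shows "sin (pi * y) * cos (pi * z) > 0"
proof -
  have a: "sin (pi * y) = (-1)^j * sin (pi * (y - j))"
    using sin_shift_npi[of "pi * (y - j)" j] by (simp add: algebra_simps)
  have b: "cos (pi * z) = (-1)^j * cos (pi * (z - j))"
    using cos_shift_npi[of "pi * (z - j)" j] by (simp add: algebra_simps)
  have c: "sin (pi * (y - j)) > 0"
    by (rule sin_gt_zero) (use assms in auto)
  have e1: "pi * (-1/2) < pi * (z - j)"
    by (rule mult_strict_left_mono) (use assms in auto)
  have e2: "pi * (z - j) < pi * (1/2)"
    by (rule mult_strict_left_mono) (use assms in auto)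
  have d: "cos (pi * (z - j)) > 0"
    by (rule cos_gt_zero_pi) (use e1 e2 in auto)
  have "sin (pi * y) * cos (pi * z) = ((-1)^j * (-1)^j) * (sin (pi * (y - j)) * cos (pi * (z - j)))"
    unfolding a b by (simp add: algebra_simps)
  also have "(-1::real)^j * (-1)^j = 1" by (simp add: power_mult_distrib[symmetric])
  finally show ?thesis using c d by simp
qed

lemma sin_cos_neg_shift:
  fixes j :: nat
  assumes "real j < y" "y < real j + 1" "real j + 1/2 < z" "z < real j + 3/2"
  shows "sin (pi * y) * cos (pi * z) < 0"
proof -
  have "sin (pi * y) * cos (pi * (z - 1)) > 0"
    by (rule sin_cos_pos_same[of j]) (use assms in auto)
  moreover have "cos (pi * (z - 1)) = - cos (pi * z)"
    by (simp add: right_diff_distrib)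
  ultimately show ?thesis by simp
qed

definition al :: "nat \<Rightarrow> real" where "al s = 1 / (1000 * (real s + 2)^2)"
definition et :: "nat \<Rightarrow> real" where "et s = pi * sin (2 * pi * al s)"
definition X0 :: "nat \<Rightarrow> real" where "X0 s = real s + 1/2 + al s"
definition KK :: "nat \<Rightarrow> real" where "KK s = 2 * ((cos (pi * al s))^2 + et s * X0 s)"
definition mm :: "nat \<Rightarrow> real" where "mm s = X0 s + 1"
definition f1 :: "nat \<Rightarrow> real \<Rightarrow> real" where "f1 s u = - pi * sin (2 * pi * u) - et s"
definition hh :: "nat \<Rightarrow> real \<Rightarrow> real" where
  "hh s x = f1 s (min \<bar>x\<bar> (X0 s)) + KK s * max 0 (\<bar>x\<bar> - X0 s)"
definition g1 :: "nat \<Rightarrow> real \<Rightarrow> real" where "g1 s u = - ((sin (pi * u))^2) - et s * u"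
definition g2 :: "nat \<Rightarrow> real \<Rightarrow> real" where "g2 s u = - KK s / 2 + KK s / 2 * (u - X0 s)^2"

lemma al_pos: "0 < al s" unfolding al_def by simp

lemma al_le: "al s \<le> 1 / 4000"
proof -
  have "(2::real)^2 \<le> (real s + 2)^2" by (rule power_mono) auto
  then have "4000 \<le> 1000 * (real s + 2)^2" by simp
  then show ?thesis unfolding al_def by (simp add: field_simps)
qed

lemma et_pos: "0 < et s"
proof -
  have "0 < sin (2 * pi * al s)"
    by (rule sin_gt_zero) (use al_pos[of s] al_le[of s] pi_gt3 in auto)
  then show ?thesis unfolding et_def by simp
qed

lemma et_le: "et s \<le> 2 * pi^2 * al s"
proof -
  have "sin (2 * pi * al s) \<le> 2 * pi * al s"
    by (rule sin_x_le_x) (use al_pos[of s] in auto)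
  then show ?thesis unfolding et_def
    using pi_gt3 by (simp add: power2_eq_square)
qed

lemma sin_X0_sq: "(sin (pi * X0 s))^2 = (cos (pi * al s))^2"
proof -
  have "sin (pi * X0 s) = sin ((pi/2 + pi * al s) + real s * pi)"
    unfolding X0_def by (simp add: algebra_simps)
  also have "\<dots> = (-1)^s * cos (pi * al s)"
    by (simp add: sin_shift_npi sin_add)
  moreover have "((-1::real)^s)^2 = 1" by (simp add: power2_eq_square flip: power_add)
  ultimately show ?thesis by (simp add: power_mult_distrib)
qed

lemma f1_X0: "f1 s (X0 s) = 0"
proof -
  define n where "n = 2 * s"
  have "sin (2 * pi * X0 s) = sin ((pi + 2 * pi * al s) + real n * pi)"
    unfolding X0_def n_def by (simp add: algebra_simps)
  also have "\<dots> = - sin (2 * pi * al s)"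
    unfolding sin_shift_npi n_def by simp
  finally show ?thesis unfolding f1_def et_def by simp
qed

lemma g1_X0: "g1 s (X0 s) = - KK s / 2"
  unfolding g1_def KK_def using sin_X0_sq[of s] by simp

lemma X0_pos: "0 < X0 s" unfolding X0_def using al_pos[of s] by simp

lemma KK_ge: "1 \<le> KK s"
proof -
  have "\<bar>sin (pi * al s)\<bar> \<le> \<bar>pi * al s\<bar>" by (rule abs_sin_x_le_abs_x)
  moreover have "pi * al s \<le> 4 * (1/4000)"
    by (rule mult_mono) (use al_pos[of s] al_le[of s] pi_less_4 pi_gt3 in auto)
  ultimately have "\<bar>sin (pi * al s)\<bar> \<le> 4 * (1/4000)"
    using al_pos[of s] pi_gt3 by simp
  then have "\<bar>sin (pi * al s)\<bar>^2 \<le> (4 * (1/4000))^2"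
    by (rule power_mono) simp
  then have "(sin (pi * al s))^2 \<le> 1/2" by (simp add: power2_eq_square)
  then have "(cos (pi * al s))^2 \<ge> 1/2"
    using sin_cos_squared_add[of "pi * al s"] by linarith
  moreover have "et s * X0 s \<ge> 0" using et_pos[of s] X0_pos[of s] by simp
  ultimately show ?thesis unfolding KK_def by (simp add: algebra_simps)
qed

lemma hh_le: "\<bar>x\<bar> \<le> X0 s \<Longrightarrow> hh s x = f1 s \<bar>x\<bar>"
  unfolding hh_def by simp

lemma hh_ge: "X0 s \<le> \<bar>x\<bar> \<Longrightarrow> hh s x = KK s * (\<bar>x\<bar> - X0 s)"
  unfolding hh_def using f1_X0[of s] by simp

lemma hh_cont: "continuous_on UNIV (hh s)"
  unfolding hh_def f1_def by (intro continuous_intros)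

lemma hh_even: "hh s (-x) = hh s x" unfolding hh_def by simp

lemma f1_prod: "f1 s u = - 2 * pi * (sin (pi * (u + al s)) * cos (pi * (u - al s)))"
proof -
  have "sin (2 * pi * u) + sin (2 * pi * al s) = 2 * sin (pi * (u + al s)) * cos (pi * (u - al s))"
  proof -
    have "(2*pi*u + 2*pi*al s)/2 = pi*(u + al s)" "(2*pi*u - 2*pi*al s)/2 = pi*(u - al s)"
      by (simp_all add: field_simps)
    then show ?thesis using sin_plus_sin[of "2*pi*u" "2*pi*al s"] by simp
  qed
  then have "pi * (sin (2 * pi * u) + sin (2 * pi * al s)) = pi * (2 * sin (pi * (u + al s)) * cos (pi * (u - al s)))"
    by simp
  then show ?thesis unfolding f1_def et_def by (simp add: algebra_simps)
qed

lemma f1_neg: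
  fixes j :: nat
  assumes "j \<le> s" "real j - al s < u" "u < real j + 1/2 + al s"
  shows "f1 s u < 0"
proof -
  have "sin (pi * (u + al s)) * cos (pi * (u - al s)) > 0"
    by (rule sin_cos_pos_same[of j]) (use assms al_pos[of s] al_le[of s] in auto)
  then show ?thesis unfolding f1_prod by (simp add: mult_pos_pos)
qed

lemma f1_pos:
  fixes j :: nat
  assumes "real j + 1/2 + al s < u" "u < real j + 1 - al s"
  shows "f1 s u > 0"
proof -
  have "sin (pi * (u + al s)) * cos (pi * (u - al s)) < 0"
    by (rule sin_cos_neg_shift[of j]) (use assms al_pos[of s] al_le[of s] in auto)
  then show ?thesis unfolding f1_prod by (simp add: mult_pos_neg)
qed

definition Wd :: "nat \<Rightarrow> real \<Rightarrow> real" where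
  "Wd s = (SOME F. F 0 = 0 \<and> (\<forall>x. (F has_real_derivative hh s x) (at x)))"

lemma Wd_props: "Wd s 0 = 0 \<and> (\<forall>x. (Wd s has_real_derivative hh s x) (at x))"
  unfolding Wd_def by (rule someI_ex[OF antideriv_exists[OF hh_cont]])

lemma Wd_deriv: "(Wd s has_real_derivative hh s x) (at x)"
  using Wd_props by blast

lemma Wd_0: "Wd s 0 = 0" using Wd_props by blast

lemma Wd_cont: "continuous_on UNIV (Wd s)"
  by (rule continuous_at_imp_continuous_on) (use Wd_deriv DERIV_isCont in blast)

definition WW :: "nat \<Rightarrow> real \<Rightarrow> real" where
  "WW s = (SOME F. F 0 = 0 \<and> (\<forall>x. (F has_real_derivative Wd s x) (at x)))"

lemma WW_props: "WW s 0 = 0 \<and> (\<forall>x. (WW s has_real_derivative Wd s x) (at x))"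
  unfolding WW_def by (rule someI_ex[OF antideriv_exists[OF Wd_cont]])

lemma WW_deriv: "(WW s has_real_derivative Wd s x) (at x)"
  using WW_props by blast

lemma WW_0: "WW s 0 = 0" using WW_props by blast

lemma Wd_odd: "Wd s (-x) = - Wd s x"
proof -
  have "\<forall>y. ((\<lambda>y. Wd s y + Wd s (-y)) has_real_derivative 0) (at y)"
  proof
    fix y
    have d2: "((\<lambda>y. Wd s (-y)) has_real_derivative hh s (-y) * (-1)) (at y)"
      by (rule DERIV_chain2[OF Wd_deriv]) (auto intro!: derivative_eq_intros)
    have "((\<lambda>y. Wd s y + Wd s (-y)) has_real_derivative (hh s y + hh s (-y) * (-1))) (at y)"
      by (rule DERIV_add[OF Wd_deriv d2])
    then show "((\<lambda>y. Wd s y + Wd s (-y)) has_real_derivative 0) (at y)"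
      by (simp add: hh_even)
  qed
  from DERIV_isconst_all[OF this, of x 0] show ?thesis by (simp add: Wd_0)
qed

lemma WW_even: "WW s (-x) = WW s x"
proof -
  have "\<forall>y. ((\<lambda>y. WW s y - WW s (-y)) has_real_derivative 0) (at y)"
  proof
    fix y
    have d2: "((\<lambda>y. WW s (-y)) has_real_derivative Wd s (-y) * (-1)) (at y)"
      by (rule DERIV_chain2[OF WW_deriv]) (auto intro!: derivative_eq_intros)
    have "((\<lambda>y. WW s y - WW s (-y)) has_real_derivative (Wd s y - Wd s (-y) * (-1))) (at y)"
      by (rule DERIV_diff[OF WW_deriv d2])
    then show "((\<lambda>y. WW s y - WW s (-y)) has_real_derivative 0) (at y)"
      by (simp add: Wd_odd)
  qed
  from DERIV_isconst_all[OF this, of x 0] show ?thesis by (simp add: WW_0)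
qed

lemma g1_deriv: "(g1 s has_real_derivative f1 s u) (at u)"
proof -
  have "(g1 s has_real_derivative (- (2 * sin (pi * u) * (cos (pi * u) * pi)) - et s)) (at u)"
    unfolding g1_def by (auto intro!: derivative_eq_intros)
  moreover have "- (2 * sin (pi * u) * (cos (pi * u) * pi)) - et s = f1 s u"
    unfolding f1_def using sin_double[of "pi * u"] by (simp add: algebra_simps)
  ultimately show ?thesis by simp
qed

lemma g2_deriv: "(g2 s has_real_derivative KK s * (u - X0 s)) (at u)"
  unfolding g2_def by (auto intro!: derivative_eq_intros)

lemma Wd_g1: assumes "0 \<le> u" "u \<le> X0 s" shows "Wd s u = g1 s u"
proof -
  have "(\<lambda>v. Wd s v - g1 s v) u = (\<lambda>v. Wd s v - g1 s v) 0"
  proof (rule DERIV_isconst2[of 0 "X0 s"])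
    show "0 < X0 s" by (rule X0_pos)
    show "continuous_on {0..X0 s} (\<lambda>v. Wd s v - g1 s v)"
      by (rule continuous_at_imp_continuous_on)
        (use Wd_deriv g1_deriv DERIV_isCont in \<open>blast intro: continuous_intros\<close>)
    fix x assume x: "0 < x" "x < X0 s"
    have "((\<lambda>v. Wd s v - g1 s v) has_real_derivative hh s x - f1 s x) (at x)"
      by (intro derivative_intros Wd_deriv g1_deriv)
    moreover have "hh s x = f1 s x" using hh_le[of x s] x by simp
    ultimately show "((\<lambda>v. Wd s v - g1 s v) has_real_derivative 0) (at x)" by simp
  qed (use assms in auto)
  then show ?thesis by (simp add: Wd_0 g1_def)
qed

lemma Wd_X0: "Wd s (X0 s) = - KK s / 2"
  using Wd_g1[of "X0 s" s] X0_pos[of s] g1_X0[of s] by simp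

lemma Wd_g2: assumes "X0 s \<le> u" shows "Wd s u = g2 s u"
proof -
  have "(\<lambda>v. Wd s v - g2 s v) u = (\<lambda>v. Wd s v - g2 s v) (X0 s)"
  proof (rule DERIV_isconst2[of "X0 s" "u + 1"])
    show "X0 s < u + 1" using assms by simp
    show "continuous_on {X0 s..u+1} (\<lambda>v. Wd s v - g2 s v)"
      by (rule continuous_at_imp_continuous_on)
        (use Wd_deriv g2_deriv DERIV_isCont in \<open>blast intro: continuous_intros\<close>)
    fix x assume x: "X0 s < x" "x < u + 1"
    have "((\<lambda>v. Wd s v - g2 s v) has_real_derivative hh s x - KK s * (x - X0 s)) (at x)"
      by (intro derivative_intros Wd_deriv g2_deriv)
    moreover have "hh s x = KK s * (x - X0 s)" using hh_ge[of s x] x X0_pos[of s] by simp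
    ultimately show "((\<lambda>v. Wd s v - g2 s v) has_real_derivative 0) (at x)" by simp
  qed (use assms in auto)
  then show ?thesis by (simp add: Wd_X0 g2_def)
qed

lemma WW_beyond: assumes "X0 s \<le> u"
  shows "WW s u = WW s (X0 s) - KK s / 2 * (u - X0 s) + KK s / 6 * (u - X0 s)^3"
proof -
  define P where "P v = WW s v - (- KK s / 2 * (v - X0 s) + KK s / 6 * (v - X0 s)^3)" for v
  have dP: "(P has_real_derivative Wd s x - g2 s x) (at x)" for x
  proof -
    have "(P has_real_derivative Wd s x - (- KK s / 2 * 1 + KK s / 6 * (3 * (x - X0 s)^2 * 1))) (at x)"
      unfolding P_def by (intro derivative_eq_intros WW_deriv) (auto simp: power2_eq_square intro: WW_deriv)
    then show ?thesis unfolding g2_def by (simp add: algebra_simps)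
  qed
  have "P u = P (X0 s)"
  proof (rule DERIV_isconst2[of "X0 s" "u + 1"])
    show "X0 s < u + 1" using assms by simp
    show "continuous_on {X0 s..u+1} P"
      by (rule continuous_at_imp_continuous_on) (use dP DERIV_isCont in blast)
    fix x assume x: "X0 s < x" "x < u + 1"
    show "(P has_real_derivative 0) (at x)" using dP[of x] Wd_g2[of s x] x by simp
  qed (use assms in auto)
  then show ?thesis unfolding P_def by simp
qed

lemma deriv_WW: "deriv (WW s) = Wd s"
  using WW_deriv DERIV_imp_deriv by blast

lemma deriv_Wd: "deriv (Wd s) = hh s"
  using Wd_deriv DERIV_imp_deriv by blast

lemma mm_pos: "0 < mm s" unfolding mm_def using X0_pos[of s] by simp

lemma Wd_mm: "Wd s (mm s) = 0"
  using Wd_g2[of s "mm s"] unfolding mm_def g2_def by simp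

lemma Wd_neg: assumes "0 < x" "x < mm s" shows "Wd s x < 0"
proof (cases "x \<le> X0 s")
  case True
  then have "Wd s x = g1 s x" using Wd_g1 assms by simp
  moreover have "et s * x > 0" using et_pos[of s] assms by simp
  ultimately show ?thesis unfolding g1_def
    using zero_le_power2[of "sin (pi * x)"] by linarith
next
  case False
  then have "Wd s x = g2 s x" using Wd_g2 by simp
  moreover have "(x - X0 s)^2 < 1^2"
    by (rule power_strict_mono) (use False assms in \<open>auto simp: mm_def\<close>)
  moreover have "KK s / 2 * (x - X0 s)^2 < KK s / 2 * 1"
    by (rule mult_strict_left_mono) (use KK_ge[of s] \<open>(x - X0 s)^2 < 1^2\<close> in auto)
  ultimately show ?thesis unfolding g2_def by simp
qed

lemma Wd_pos: assumes "mm s < x" shows "Wd s x > 0"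
proof -
  have "Wd s x = g2 s x" using Wd_g2 assms X0_pos[of s] unfolding mm_def by simp
  moreover have "1^2 < (x - X0 s)^2"
    by (rule power_strict_mono) (use assms in \<open>auto simp: mm_def\<close>)
  moreover have "KK s / 2 * 1 < KK s / 2 * (x - X0 s)^2"
    by (rule mult_strict_left_mono) (use KK_ge[of s] \<open>1^2 < (x - X0 s)^2\<close> in auto)
  ultimately show ?thesis unfolding g2_def by simp
qed

lemma WW_top: "filterlim (\<lambda>x. WW s x / x^2) at_top at_top"
proof -
  define c where "c = WW s (X0 s)"
  define K where "K = KK s"
  define a where "a = X0 s"
  have K: "K > 0" using KK_ge[of s] unfolding K_def by simp
  have lim: "filterlim (\<lambda>x::real. (c - K/2 * (x - a) + K/6 * (x - a)^3) / x^2) at_top at_top"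
    using K by real_asymp
  have ev: "eventually (\<lambda>x. (c - K/2 * (x - a) + K/6 * (x - a)^3) / x^2 = WW s x / x^2) at_top"
    using eventually_ge_at_top[of a]
  proof eventually_elim
    case (elim x)
    then show ?case using WW_beyond[of s x] unfolding c_def K_def a_def by simp
  qed
  show ?thesis using lim filterlim_cong[OF refl refl ev] by simp
qed

lemma WW_bot: "filterlim (\<lambda>x. WW s x / x^2) at_top at_bot"
  unfolding filterlim_at_bot_mirror using WW_top[of s] by (simp add: WW_even)

lemma WW_well: "well_potential_at (WW s) (mm s)"
  unfolding well_potential_at_def C2_def
proof (intro conjI allI impI)
  show "0 < mm s" by (rule mm_pos)
  fix x
  show "WW s differentiable at x" using WW_deriv real_differentiable_def by blast
  show "deriv (WW s) differentiable at x" unfolding deriv_WW using Wd_deriv real_differentiable_def by blast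
  show "continuous_on UNIV (deriv (deriv (WW s)))" unfolding deriv_WW deriv_Wd by (rule hh_cont)
  show "WW s (- x) = WW s x" by (rule WW_even)
  show "deriv (WW s) (mm s) = 0" unfolding deriv_WW by (rule Wd_mm)
  show "deriv (WW s) (- mm s) = 0" unfolding deriv_WW Wd_odd Wd_mm by simp
  show "x \<in> {- mm s<..<0} \<or> mm s < x \<Longrightarrow> 0 < deriv (WW s) x"
    unfolding deriv_WW using Wd_pos[of s x] Wd_neg[of "-x" s] Wd_odd[of s x] by auto
  show "x < - mm s \<or> x \<in> {0<..<mm s} \<Longrightarrow> deriv (WW s) x < 0"
    unfolding deriv_WW using Wd_pos[of s "-x"] Wd_neg[of x s] Wd_odd[of s x] by auto
next
  show "filterlim (\<lambda>x. WW s x / x^2) at_top at_top" by (rule WW_top)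
  show "filterlim (\<lambda>x. WW s x / x^2) at_top at_bot" by (rule WW_bot)
qed

definition ZA :: "nat \<Rightarrow> real set" where "ZA s = (\<lambda>k. real k - al s) ` {1..s}"
definition ZB :: "nat \<Rightarrow> real set" where "ZB s = (\<lambda>j. real j + 1/2 + al s) ` {0..s}"

lemma hh_neg_int:
  fixes j :: nat
  assumes "j \<le> s" "real j - al s < y" "y < real j + 1/2 + al s" "0 \<le> y"
  shows "hh s y < 0"
proof -
  have "y \<le> X0 s" using assms unfolding X0_def by simp
  then have "hh s y = f1 s y" using hh_le[of y s] assms by simp
  then show ?thesis using f1_neg[OF assms(1-3)] by simp
qed

lemma hh_pos_int:
  fixes j :: nat
  assumes "j < s" "real j + 1/2 + al s < y" "y < real j + 1 - al s"
  shows "hh s y > 0"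
proof -
  have "y \<le> X0 s" using assms al_pos[of s] unfolding X0_def by simp
  moreover have "0 \<le> y" using assms al_pos[of s] by simp
  ultimately have "hh s y = f1 s y" using hh_le[of y s] by simp
  then show ?thesis using f1_pos[OF assms(2-3)] by simp
qed

lemma hh_pos_beyond: "X0 s < y \<Longrightarrow> hh s y > 0"
  using hh_ge[of s y] KK_ge[of s] X0_pos[of s] by simp

lemma infl_ZB: assumes "z \<in> ZB s" shows "inflection_point (WW s) z"
proof -
  obtain j where j: "j \<le> s" "z = real j + 1/2 + al s" using assms unfolding ZB_def by auto
  have al: "0 < al s" "al s \<le> 1/4000" using al_pos al_le by auto
  show ?thesis unfolding inflection_point_def deriv_WW deriv_Wd
  proof (intro exI[of _ "1/4"] conjI disjI2 ballI)
    fix y assume "y \<in> {z - 1/4<..<z}"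
    then show "hh s y < 0" using hh_neg_int[of j s y] j al by auto
  next
    fix y assume y: "y \<in> {z<..<z + 1/4}"
    show "hh s y > 0"
    proof (cases "j = s")
      case True
      then show ?thesis using y j hh_pos_beyond[of s y] unfolding X0_def by auto
    next
      case False
      then show ?thesis using y j hh_pos_int[of j s y] al by auto
    qed
  qed simp
qed

lemma infl_ZA: assumes "z \<in> ZA s" shows "inflection_point (WW s) z"
proof -
  obtain k where k: "1 \<le> k" "k \<le> s" "z = real k - al s" using assms unfolding ZA_def by auto
  have al: "0 < al s" "al s \<le> 1/4000" using al_pos al_le by auto
  show ?thesis unfolding inflection_point_def deriv_WW deriv_Wd
  proof (intro exI[of _ "1/4"] conjI disjI1 ballI)
    fix y assume y: "y \<in> {z - 1/4<..<z}"
    have "hh s y > 0" using hh_pos_int[of "k - 1" s y] k al y by (auto simp: of_nat_diff)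
    then show "hh s y > 0" .
  next
    fix y assume y: "y \<in> {z<..<z + 1/4}"
    show "hh s y < 0" using hh_neg_int[of k s y] k al y by auto
  qed simp
qed

lemma not_infl:
  assumes "0 < x" "x < mm s" "x \<notin> ZA s" "x \<notin> ZB s"
  shows "\<not> inflection_point (WW s) x"
proof -
  have al: "0 < al s" "al s \<le> 1/4000" using al_pos al_le by auto
  have "\<exists>a b. a < x \<and> x < b \<and> ((\<forall>y\<in>{a<..<b}. hh s y < 0) \<or> (\<forall>y\<in>{a<..<b}. hh s y > 0))"
  proof (cases "x > X0 s")
    case True
    then show ?thesis using hh_pos_beyond[of s] by (intro exI[of _ "X0 s"] exI[of _ "x+1"]) auto
  next
    case False
    define j where "j = nat \<lfloor>x + al s\<rfloor>"
    have fl: "0 \<le> \<lfloor>x + al s\<rfloor>" using assms al by simp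
    have j1: "real j \<le> x + al s" "x + al s < real j + 1"
      unfolding j_def using fl by linarith+
    have js: "j \<le> s"
    proof -
      have "real j < real s + 1" using j1 False al unfolding X0_def by linarith
      then show ?thesis by simp
    qed
    consider "x = real j - al s" | "real j - al s < x \<and> x < real j + 1/2 + al s"
      | "x = real j + 1/2 + al s" | "real j + 1/2 + al s < x" using j1 by linarith
    then show ?thesis
    proof cases
      case 1
      then have "1 \<le> j" using assms al by (cases j) auto
      then have "x \<in> ZA s" unfolding ZA_def using 1 js by auto
      then show ?thesis using assms by simp
    next
      case 2
      have "\<forall>y\<in>{max (real j - al s) 0<..<real j + 1/2 + al s}. hh s y < 0"
      proof
        fix y assume "y \<in> {max (real j - al s) 0<..<real j + 1/2 + al s}"
        then have "real j - al s < y" "y < real j + 1/2 + al s" "0 \<le> y" by auto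
        then show "hh s y < 0" using hh_neg_int[of j s y] js by blast
      qed
      moreover have "max (real j - al s) 0 < x" using 2 assms by simp
      ultimately show ?thesis using 2 by blast
    next
      case 3
      then have "x \<in> ZB s" unfolding ZB_def using js by auto
      then show ?thesis using assms by simp
    next
      case 4
      have "j < s" using 4 False unfolding X0_def by simp
      have "\<forall>y\<in>{real j + 1/2 + al s<..<real j + 1 - al s}. hh s y > 0"
      proof
        fix y assume "y \<in> {real j + 1/2 + al s<..<real j + 1 - al s}"
        then have "real j + 1/2 + al s < y" "y < real j + 1 - al s" by auto
        then show "hh s y > 0" using hh_pos_int[of j s y] \<open>j < s\<close> by blast
      qed
      moreover have "x < real j + 1 - al s" using j1 by linarith
      ultimately show ?thesis using 4 by blast
    qed
  qed
  then obtain a b where ab: "a < x" "x < b"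
    and sg: "(\<forall>y\<in>{a<..<b}. hh s y < 0) \<or> (\<forall>y\<in>{a<..<b}. hh s y > 0)" by blast
  show ?thesis
  proof
    assume "inflection_point (WW s) x"
    then obtain d where d: "d > 0" and
      c: "((\<forall>y\<in>{x-d<..<x}. hh s y > 0) \<and> (\<forall>y\<in>{x<..<x+d}. hh s y < 0)) \<or>
          ((\<forall>y\<in>{x-d<..<x}. hh s y < 0) \<and> (\<forall>y\<in>{x<..<x+d}. hh s y > 0))"
      unfolding inflection_point_def deriv_WW deriv_Wd by blast
    define e where "e = min d (min (x - a) (b - x)) / 2"
    have e: "0 < e" "e < d" "e < x - a" "e < b - x" unfolding e_def using d ab by auto
    have l: "x - e \<in> {x-d<..<x}" "x - e \<in> {a<..<b}" using e by auto
    have r: "x + e \<in> {x<..<x+d}" "x + e \<in> {a<..<b}" using e by auto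
    from sg show False
    proof
      assume A: "\<forall>y\<in>{a<..<b}. hh s y < 0"
      then have "hh s (x - e) < 0" "hh s (x + e) < 0" using l r by auto
      moreover have "0 < hh s (x-e) \<or> 0 < hh s (x+e)" using c l(1) r(1) by blast
      ultimately show False by linarith
    next
      assume A: "\<forall>y\<in>{a<..<b}. hh s y > 0"
      then have "hh s (x - e) > 0" "hh s (x + e) > 0" using l r by auto
      moreover have "hh s (x-e) < 0 \<or> hh s (x+e) < 0" using c l(1) r(1) by blast
      ultimately show False by linarith
    qed
  qed
qed

lemma infl_set: "{x\<in>{0<..<mm s}. inflection_point (WW s) x} = ZA s \<union> ZB s"
proof -
  have al: "0 < al s" "al s \<le> 1/4000" using al_pos al_le by auto
  have sub: "ZA s \<union> ZB s \<subseteq> {0<..<mm s}"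
    unfolding ZA_def ZB_def mm_def X0_def using al by auto
  show ?thesis
  proof
    show "{x\<in>{0<..<mm s}. inflection_point (WW s) x} \<subseteq> ZA s \<union> ZB s"
      using not_infl by auto
    show "ZA s \<union> ZB s \<subseteq> {x\<in>{0<..<mm s}. inflection_point (WW s) x}"
      using sub infl_ZA infl_ZB by auto
  qed
qed

lemma card_Z: "finite (ZA s \<union> ZB s) \<and> card (ZA s \<union> ZB s) = 2 * s + 1"
proof -
  have al: "0 < al s" "al s \<le> 1/4000" using al_pos al_le by auto
  have disj: "ZA s \<inter> ZB s = {}"
  proof (rule ccontr)
    assume "ZA s \<inter> ZB s \<noteq> {}"
    then obtain k j :: nat where "real k - al s = real j + 1/2 + al s"
      unfolding ZA_def ZB_def by auto
    then have "real k - real j = 1/2 + 2 * al s" by simp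
    then have "real k - real j > 0" "real k - real j < 1" using al by auto
    then have "j < k" "k < j + 1" by linarith+
    then show False by simp
  qed
  have cA: "card (ZA s) = s" unfolding ZA_def
    by (subst card_image) (auto simp: inj_on_def)
  have cB: "card (ZB s) = s + 1" unfolding ZB_def
    by (subst card_image) (auto simp: inj_on_def)
  have fin: "finite (ZA s)" "finite (ZB s)" unfolding ZA_def ZB_def by auto
  show ?thesis using card_Un_disjoint[OF fin disj] cA cB fin by simp
qed

lemma WW_class: "WW s \<in> Wclass_s (2 * s + 1)"
  unfolding Wclass_s_def using WW_well[of s] infl_set[of s] card_Z[of s] by auto

definition cf :: "nat \<Rightarrow> (nat \<Rightarrow> nat \<Rightarrow> real) \<Rightarrow> real \<Rightarrow> (nat \<Rightarrow> real) \<Rightarrow> nat \<Rightarrow> real" where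
  "cf n \<gamma> \<kappa> y i = 2 * \<kappa> * (\<Sum>j=1..n. \<gamma> i j * (y i - y j))"

lemma double_sum_delta:
  fixes g :: "nat \<Rightarrow> nat \<Rightarrow> real"
  assumes "i \<in> A" "finite A"
  shows "(\<Sum>a\<in>A. \<Sum>b\<in>A. g a b * ((if a = i then 1 else 0) - (if b = i then 1 else 0)))
       = (\<Sum>b\<in>A. g i b) - (\<Sum>a\<in>A. g a i)"
proof -
  have "(\<Sum>a\<in>A. \<Sum>b\<in>A. g a b * ((if a = i then 1 else 0) - (if b = i then 1 else 0)))
      = (\<Sum>a\<in>A. \<Sum>b\<in>A. (if a = i then g a b else 0)) - (\<Sum>a\<in>A. \<Sum>b\<in>A. (if b = i then g a b else 0))"
  proof -
    have "\<And>a b. g a b * ((if a = i then 1 else 0) - (if b = i then 1 else 0))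
       = (if a = i then g a b else 0) - (if b = i then g a b else 0)" by auto
    then show ?thesis by (simp add: sum_subtractf)
  qed
  also have "(\<Sum>a\<in>A. \<Sum>b\<in>A. (if a = i then g a b else 0)) = (\<Sum>b\<in>A. g i b)"
  proof -
    have "\<And>a. (\<Sum>b\<in>A. (if a = i then g a b else 0)) = (if a = i then (\<Sum>b\<in>A. g a b) else 0)"
      by simp
    then show ?thesis using assms by (simp add: sum.delta')
  qed
  also have "(\<Sum>a\<in>A. \<Sum>b\<in>A. (if b = i then g a b else 0)) = (\<Sum>a\<in>A. g a i)"
    using assms by (simp add: sum.delta')
  finally show ?thesis .
qed

lemma energy_slice_deriv:
  fixes W :: "real \<Rightarrow> real"
  assumes sym: "\<forall>a\<in>{1..n}. \<forall>b\<in>{1..n}. \<gamma> a b = \<gamma> b a"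
    and i: "i \<in> {1..n}"
    and dW: "(W has_real_derivative w) (at t)"
  shows "((\<lambda>t. energy W n \<gamma> \<kappa> (x(i:=t))) has_real_derivative (w + cf n \<gamma> \<kappa> (x(i:=t)) i)) (at t)"
proof -
  define y where "y t = x(i:=t)" for t
  define d where "d b = (if b = i then 1 else (0::real))" for b
  have dy: "((\<lambda>t. y t b) has_real_derivative d b) (at t)" for b
    unfolding y_def d_def by (cases "b = i") auto
  have dWb: "((\<lambda>t. W (y t b)) has_real_derivative (if b = i then w else 0)) (at t)" for b
    unfolding y_def by (cases "b = i") (auto simp: dW)
  have dsq: "((\<lambda>t. \<gamma> a b * (y t a - y t b)^2) has_real_derivative
        \<gamma> a b * (2 * (y t a - y t b) * (d a - d b))) (at t)" for a b
    by (rule derivative_eq_intros dy refl | simp)+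
  have D: "((\<lambda>t. energy W n \<gamma> \<kappa> (y t)) has_real_derivative
      (\<Sum>b=1..n. (if b = i then w else 0)) +
      \<kappa> / 2 * (\<Sum>a=1..n. \<Sum>b=1..n. \<gamma> a b * (2 * (y t a - y t b) * (d a - d b)))) (at t)"
    unfolding energy_def
    by (intro DERIV_add DERIV_cmult DERIV_sum dWb dsq)
  have v1: "(\<Sum>b=1..n. (if b = i then w else 0)) = w" using i by simp
  have "(\<Sum>a=1..n. \<Sum>b=1..n. \<gamma> a b * (2 * (y t a - y t b) * (d a - d b)))
      = (\<Sum>a=1..n. \<Sum>b=1..n. (2 * \<gamma> a b * (y t a - y t b)) * (d a - d b))"
    by (simp add: algebra_simps)
  also have "\<dots> = (\<Sum>b=1..n. 2 * \<gamma> i b * (y t i - y t b)) - (\<Sum>a=1..n. 2 * \<gamma> a i * (y t a - y t i))"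
    unfolding d_def by (rule double_sum_delta) (use i in auto)
  also have "(\<Sum>a=1..n. 2 * \<gamma> a i * (y t a - y t i)) = - (\<Sum>a=1..n. 2 * \<gamma> i a * (y t i - y t a))"
    by (subst sum_negf[symmetric], rule sum.cong) (use sym i in \<open>auto simp: algebra_simps\<close>)
  finally have v2a: "(\<Sum>a=1..n. \<Sum>b=1..n. \<gamma> a b * (2 * (y t a - y t b) * (d a - d b)))
      = (\<Sum>b=1..n. 2 * \<gamma> i b * (y t i - y t b)) + (\<Sum>a=1..n. 2 * \<gamma> i a * (y t i - y t a))"
    by simp
  have "(\<Sum>b=1..n. 2 * \<gamma> i b * (y t i - y t b)) = 2 * (\<Sum>b=1..n. \<gamma> i b * (y t i - y t b))"
    by (simp add: sum_distrib_left mult.assoc)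
  with v2a have v2: "(\<Sum>a=1..n. \<Sum>b=1..n. \<gamma> a b * (2 * (y t a - y t b) * (d a - d b)))
      = 4 * (\<Sum>b=1..n. \<gamma> i b * (y t i - y t b))"
    by simp
  have eqv: "(\<Sum>b=1..n. (if b = i then w else 0)) +
      \<kappa> / 2 * (\<Sum>a=1..n. \<Sum>b=1..n. \<gamma> a b * (2 * (y t a - y t b) * (d a - d b)))
      = w + cf n \<gamma> \<kappa> (x(i:=t)) i"
    unfolding v1 v2 by (simp add: cf_def y_def)
  from D have "((\<lambda>t. energy W n \<gamma> \<kappa> (y t)) has_real_derivative (w + cf n \<gamma> \<kappa> (x(i:=t)) i)) (at t)"
    by (simp only: eqv)
  then show ?thesis unfolding y_def .
qed

lemma energy_cont:
  assumes "continuous_on UNIV W"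
  shows "continuous_on UNIV (energy W n \<gamma> \<kappa>)"
proof -
  have c: "continuous_on UNIV (\<lambda>x::nat\<Rightarrow>real. x i)" for i by simp
  have cW: "continuous_on UNIV (\<lambda>x::nat\<Rightarrow>real. W (x i))" for i
    by (rule continuous_on_compose2[OF assms c]) auto
  show ?thesis unfolding energy_def
    by (intro continuous_intros cW c)
qed

definition boxset :: "nat \<Rightarrow> (nat \<Rightarrow> real) \<Rightarrow> (nat \<Rightarrow> real) \<Rightarrow> (nat \<Rightarrow> real) set" where
  "boxset n lo hi = {x \<in> pts n. \<forall>i\<in>{1..n}. lo i \<le> x i \<and> x i \<le> hi i}"

lemma boxset_compact:
  assumes "\<forall>i\<in>{1..n}. lo i \<le> hi i"
  shows "compact (boxset n lo hi)"
proof -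
  define S where "S i = (if i \<in> {1..n} then {lo i..hi i} else {0::real})" for i
  have eq: "boxset n lo hi = PiE UNIV S"
    unfolding boxset_def pts_def S_def PiE_def Pi_def extensional_def by (auto split: if_splits)
  have "compactin (product_topology (\<lambda>i. euclidean) UNIV) (PiE UNIV S)"
    unfolding compactin_PiE S_def by auto
  then show ?thesis unfolding eq euclidean_product_topology by simp
qed

lemma box_min:
  fixes f :: "(nat \<Rightarrow> real) \<Rightarrow> real"
  assumes n: "1 \<le> n"
    and lohi: "\<forall>i\<in>{1..n}. lo i < hi i"
    and cont: "continuous_on UNIV f"
    and left: "\<And>x i. x \<in> boxset n lo hi \<Longrightarrow> i \<in> {1..n} \<Longrightarrow> x i = lo i \<Longrightarrow>
                 \<exists>t. lo i < t \<and> t < hi i \<and> f (x(i:=t)) < f x"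
    and right: "\<And>x i. x \<in> boxset n lo hi \<Longrightarrow> i \<in> {1..n} \<Longrightarrow> x i = hi i \<Longrightarrow>
                 \<exists>t. lo i < t \<and> t < hi i \<and> f (x(i:=t)) < f x"
  shows "\<exists>P. is_local_min n f P \<and> (\<forall>i\<in>{1..n}. lo i < P i \<and> P i < hi i)"
proof -
  let ?B = "boxset n lo hi"
  have comp: "compact ?B" by (rule boxset_compact) (use lohi in auto)
  have ne: "(\<lambda>i. if i \<in> {1..n} then lo i else 0) \<in> ?B"
    unfolding boxset_def pts_def using lohi by auto
  obtain P where P: "P \<in> ?B" "\<forall>y\<in>?B. f P \<le> f y"
    using continuous_attains_inf[OF comp _ continuous_on_subset[OF cont]] ne by blast
  have upd: "x(i:=t) \<in> ?B" if "x \<in> ?B" "lo i \<le> t" "t \<le> hi i" "i \<in> {1..n}" for x i t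
    using that unfolding boxset_def pts_def by auto
  have int: "lo i < P i \<and> P i < hi i" if i: "i \<in> {1..n}" for i
  proof (rule ccontr)
    assume "\<not> (lo i < P i \<and> P i < hi i)"
    then have "P i = lo i \<or> P i = hi i" using P(1) i unfolding boxset_def by force
    then obtain t where t: "lo i < t" "t < hi i" "f (P(i:=t)) < f P"
      using left[OF P(1) i] right[OF P(1) i] by blast
    have "P(i:=t) \<in> ?B" by (rule upd) (use P(1) t i in auto)
    then show False using P(2) t by force
  qed
  define e where "e = Min ((\<lambda>i. min (P i - lo i) (hi i - P i)) ` {1..n})"
  have e: "0 < e" unfolding e_def using int n by (subst Min_gr_iff) auto
  have eb: "e \<le> min (P i - lo i) (hi i - P i)" if "i \<in> {1..n}" for i
    unfolding e_def using that by (intro Min_le) auto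
  have "is_local_min n f P"
    unfolding is_local_min_def
  proof (intro conjI exI[of _ e] ballI impI)
    show "P \<in> pts n" using P(1) unfolding boxset_def by auto
    show "0 < e" by (rule e)
    fix y assume y: "y \<in> pts n" "\<forall>i\<in>{1..n}. \<bar>y i - P i\<bar> < e"
    have "y \<in> ?B" unfolding boxset_def
    proof (intro CollectI conjI ballI)
      show "y \<in> pts n" by (rule y)
      fix i assume i: "i \<in> {1..n}"
      show "lo i \<le> y i" using y(2) i eb[OF i] by force
      show "y i \<le> hi i" using y(2) i eb[OF i] by force
    qed
    then show "f P \<le> f y" using P(2) by blast
  qed
  then show ?thesis using int by blast
qed

lemma exists_lower_right:
  assumes "(g has_real_derivative D) (at a)" "D < 0" "a < b"
  shows "\<exists>t. a < t \<and> t < b \<and> g t < g a"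
proof -
  obtain d where d: "d > 0" "\<forall>h>0. h < d \<longrightarrow> g a > g (a + h)"
    using DERIV_neg_dec_right[OF assms(1,2)] by blast
  define h where "h = min d (b - a) / 2"
  have "h > 0" "h < d" "h < b - a" unfolding h_def using d assms by auto
  then show ?thesis using d(2) by (intro exI[of _ "a + h"]) auto
qed

lemma exists_lower_left:
  assumes "(g has_real_derivative D) (at b)" "D > 0" "a < b"
  shows "\<exists>t. a < t \<and> t < b \<and> g t < g b"
proof -
  obtain d where d: "d > 0" "\<forall>h>0. h < d \<longrightarrow> g (b - h) < g b"
    using DERIV_pos_inc_left[OF assms(1,2)] by blast
  define h where "h = min d (b - a) / 2"
  have "h > 0" "h < d" "h < b - a" unfolding h_def using d assms by auto
  then show ?thesis using d(2) by (intro exI[of _ "b - h"]) auto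
qed

definition Rrow :: "nat \<Rightarrow> (nat \<Rightarrow> nat \<Rightarrow> real) \<Rightarrow> nat \<Rightarrow> real" where
  "Rrow n \<gamma> i = (\<Sum>j\<in>{1..n} - {i}. \<bar>\<gamma> i j\<bar>)"

lemma cf_bound:
  assumes i: "i \<in> {1..n}" and M: "\<forall>j\<in>{1..n}. \<bar>y j\<bar> \<le> M" and k: "0 \<le> \<kappa>"
  shows "\<bar>cf n \<gamma> \<kappa> y i\<bar> \<le> 4 * \<kappa> * M * Rrow n \<gamma> i"
proof -
  have "(\<Sum>j=1..n. \<gamma> i j * (y i - y j)) = \<gamma> i i * (y i - y i) + (\<Sum>j\<in>{1..n} - {i}. \<gamma> i j * (y i - y j))"
    using i by (subst sum.remove[of _ i]) auto
  then have eq: "(\<Sum>j=1..n. \<gamma> i j * (y i - y j)) = (\<Sum>j\<in>{1..n} - {i}. \<gamma> i j * (y i - y j))" by simp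
  have "\<bar>\<Sum>j\<in>{1..n} - {i}. \<gamma> i j * (y i - y j)\<bar> \<le> (\<Sum>j\<in>{1..n} - {i}. \<bar>\<gamma> i j * (y i - y j)\<bar>)"
    by (rule sum_abs)
  also have "\<dots> \<le> (\<Sum>j\<in>{1..n} - {i}. \<bar>\<gamma> i j\<bar> * (2 * M))"
  proof (rule sum_mono)
    fix j assume j: "j \<in> {1..n} - {i}"
    have "\<bar>y i\<bar> \<le> M" "\<bar>y j\<bar> \<le> M" using M i j by auto
    then have "\<bar>y i - y j\<bar> \<le> 2 * M" by linarith
    then show "\<bar>\<gamma> i j * (y i - y j)\<bar> \<le> \<bar>\<gamma> i j\<bar> * (2 * M)"
      by (simp add: abs_mult mult_left_mono)
  qed
  also have "\<dots> = (\<Sum>j\<in>{1..n} - {i}. (2 * M) * \<bar>\<gamma> i j\<bar>)" by (simp add: mult.commute)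
  also have "\<dots> = 2 * M * Rrow n \<gamma> i" unfolding Rrow_def by (rule sum_distrib_left[symmetric])
  finally have "\<bar>\<Sum>j=1..n. \<gamma> i j * (y i - y j)\<bar> \<le> 2 * M * Rrow n \<gamma> i" unfolding eq .
  then have "2 * \<kappa> * \<bar>\<Sum>j=1..n. \<gamma> i j * (y i - y j)\<bar> \<le> 2 * \<kappa> * (2 * M * Rrow n \<gamma> i)"
    using k by (intro mult_left_mono) auto
  then show ?thesis unfolding cf_def using k by (simp add: abs_mult)
qed

lemma energy_neg: "energy W n \<gamma> \<kappa> (\<lambda>i. - x i) = energy W n \<gamma> \<kappa> x" if "\<And>t. W (-t) = W t"
  unfolding energy_def using that by (simp add: power2_commute algebra_simps)

lemma local_min_neg:
  assumes ev: "\<And>t. W (-t) = W t" and lm: "is_local_min n (energy W n \<gamma> \<kappa>) x"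
  shows "is_local_min n (energy W n \<gamma> \<kappa>) (\<lambda>i. - x i)"
proof -
  obtain e where e: "e > 0" "\<forall>y\<in>pts n. (\<forall>i\<in>{1..n}. \<bar>y i - x i\<bar> < e) \<longrightarrow>
      energy W n \<gamma> \<kappa> x \<le> energy W n \<gamma> \<kappa> y" and x: "x \<in> pts n"
    using lm unfolding is_local_min_def by blast
  show ?thesis unfolding is_local_min_def
  proof (intro conjI exI[of _ e] ballI impI)
    show "(\<lambda>i. - x i) \<in> pts n" using x unfolding pts_def by auto
    show "0 < e" by (rule e)
    fix y assume y: "y \<in> pts n" "\<forall>i\<in>{1..n}. \<bar>y i - - x i\<bar> < e"
    have A: "(\<lambda>i. - y i) \<in> pts n" using y unfolding pts_def by auto
    have B: "\<forall>i\<in>{1..n}. \<bar>- y i - x i\<bar> < e" using y(2) by (simp add: abs_minus_commute add.commute)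
    have "energy W n \<gamma> \<kappa> x \<le> energy W n \<gamma> \<kappa> (\<lambda>i. - y i)"
      using e(2)[THEN bspec, OF A] B by (rule mp)
    then show "energy W n \<gamma> \<kappa> (\<lambda>i. - x i) \<le> energy W n \<gamma> \<kappa> y"
      using energy_neg[of W n \<gamma> \<kappa> x] energy_neg[of W n \<gamma> \<kappa> y] ev by simp
  qed
qed

lemma local_min_kappa0:
  assumes lm: "is_local_min n (energy (WW s) n \<gamma> 0) x" and i: "i \<in> {1..n}"
  shows "x i = mm s \<or> x i = - mm s"
proof -
  let ?W = "WW s"
  obtain e where e: "e > 0" "\<forall>y\<in>pts n. (\<forall>j\<in>{1..n}. \<bar>y j - x j\<bar> < e) \<longrightarrow>
      energy ?W n \<gamma> 0 x \<le> energy ?W n \<gamma> 0 y" and x: "x \<in> pts n"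
    using lm unfolding is_local_min_def by blast
  have en: "energy ?W n \<gamma> 0 (x(i:=t)) = ?W t + (\<Sum>b\<in>{1..n} - {i}. ?W (x b))" for t
  proof -
    have "energy ?W n \<gamma> 0 (x(i:=t)) = (\<Sum>b=1..n. ?W ((x(i:=t)) b))" unfolding energy_def by simp
    also have "\<dots> = ?W ((x(i:=t)) i) + (\<Sum>b\<in>{1..n} - {i}. ?W ((x(i:=t)) b))"
      using i by (subst sum.remove[of _ i]) auto
    also have "(\<Sum>b\<in>{1..n} - {i}. ?W ((x(i:=t)) b)) = (\<Sum>b\<in>{1..n} - {i}. ?W (x b))"
      by (rule sum.cong) auto
    finally show ?thesis by (simp only: fun_upd_same)
  qed
  have loc: "?W (x i) \<le> ?W t" if "\<bar>t - x i\<bar> < e" for t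
  proof -
    have "x(i:=t) \<in> pts n" using x i unfolding pts_def by auto
    moreover have "\<forall>j\<in>{1..n}. \<bar>(x(i:=t)) j - x j\<bar> < e" using that e(1) by auto
    ultimately have "energy ?W n \<gamma> 0 x \<le> energy ?W n \<gamma> 0 (x(i:=t))" using e(2) by blast
    moreover have "x(i := x i) = x" by simp
    ultimately show ?thesis using en[of t] en[of "x i"] by simp
  qed
  show ?thesis
  proof (rule ccontr)
    assume nm: "\<not> (x i = mm s \<or> x i = - mm s)"
    consider "Wd s (x i) < 0" | "Wd s (x i) > 0" | "Wd s (x i) = 0" by linarith
    then show False
    proof cases
      case 1
      obtain d where d: "d > 0" "\<forall>h>0. h < d \<longrightarrow> ?W (x i) > ?W (x i + h)"
        using DERIV_neg_dec_right[OF WW_deriv 1] by blast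
      define h where "h = min d e / 2"
      have "h > 0" "h < d" "h < e" unfolding h_def using d e by auto
      then show False using d(2) loc[of "x i + h"] by force
    next
      case 2
      obtain d where d: "d > 0" "\<forall>h>0. h < d \<longrightarrow> ?W (x i - h) < ?W (x i)"
        using DERIV_pos_inc_left[OF WW_deriv 2] by blast
      define h where "h = min d e / 2"
      have "h > 0" "h < d" "h < e" unfolding h_def using d e by auto
      then show False using d(2) loc[of "x i - h"] by force
    next
      case 3
      have "x i = 0"
      proof (rule ccontr)
        assume "x i \<noteq> 0"
        then consider "0 < x i \<and> x i < mm s" | "mm s < x i" | "- mm s < x i \<and> x i < 0" | "x i < - mm s"
          using nm by linarith
        then show False
        proof cases
          case 1 then show ?thesis using Wd_neg[of "x i" s] 3 by simp
        next
          case 2 then show ?thesis using Wd_pos[of s "x i"] 3 by simp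
        next
          case 3 then show ?thesis using Wd_neg[of "- x i" s] Wd_odd[of s "x i"] \<open>Wd s (x i) = 0\<close> by simp
        next
          case 4 then show ?thesis using Wd_pos[of s "- x i"] Wd_odd[of s "x i"] \<open>Wd s (x i) = 0\<close> by simp
        qed
      qed
      define h where "h = min e (mm s) / 2"
      have h: "0 < h" "h < e" "h < mm s" unfolding h_def using e mm_pos[of s] by auto
      obtain z where z: "0 < z" "z < h" "?W h - ?W 0 = (h - 0) * Wd s z"
        using MVT2[of 0 h ?W "Wd s"] h WW_deriv by blast
      have "Wd s z < 0" using Wd_neg[of z s] z h by simp
      then have "h * Wd s z < 0" using h mult_pos_neg[of h "Wd s z"] by blast
      then have "?W h < ?W 0" using z(3) by simp
      then show False using loc[of h] \<open>x i = 0\<close> h by simp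
    qed
  qed
qed

lemma sin_sq_shift: "(sin (x + real k * pi))^2 = (sin x)^2"
  by (simp add: sin_shift_npi power_mult_distrib power2_eq_square flip: power_add)

lemma Wd_trap_lo: assumes "1 \<le> k" "k \<le> s" shows "Wd s (real k - 1/2) \<le> -1"
proof -
  have "0 \<le> real k - 1/2" "real k - 1/2 \<le> X0 s" using assms al_pos[of s] unfolding X0_def by auto
  then have "Wd s (real k - 1/2) = g1 s (real k - 1/2)" by (rule Wd_g1)
  moreover have "(sin (pi * (real k - 1/2)))^2 = 1"
  proof -
    have "(sin (pi * (real k - 1/2)))^2 = (sin (- (pi/2) + real k * pi))^2" by (simp add: algebra_simps)
    also have "\<dots> = 1" unfolding sin_sq_shift by simp
    finally show ?thesis .
  qed
  moreover have "et s * (real k - 1/2) \<ge> 0" using et_pos[of s] assms by simp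
  ultimately show ?thesis unfolding g1_def by simp
qed

lemma Wd_trap_hi: assumes "1 \<le> k" "k \<le> s"
  shows "Wd s (real k - al s) \<ge> - (16 * (al s)^2 + 32 * al s * real s)"
proof -
  have al: "0 < al s" "al s \<le> 1/4000" using al_pos al_le by auto
  have "0 \<le> real k - al s" "real k - al s \<le> X0 s" using assms al unfolding X0_def by auto
  then have "Wd s (real k - al s) = g1 s (real k - al s)" by (rule Wd_g1)
  moreover have "(sin (pi * (real k - al s)))^2 = (sin (pi * al s))^2"
  proof -
    have "(sin (pi * (real k - al s)))^2 = (sin (- (pi * al s) + real k * pi))^2" by (simp add: algebra_simps)
    also have "\<dots> = (sin (pi * al s))^2" unfolding sin_sq_shift by simp
    finally show ?thesis .
  qed
  moreover have "(sin (pi * al s))^2 \<le> 16 * (al s)^2"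
  proof -
    have "\<bar>sin (pi * al s)\<bar> \<le> \<bar>pi * al s\<bar>" by (rule abs_sin_x_le_abs_x)
    also have "\<dots> \<le> 4 * al s" using al pi_less_4 by (simp add: mult_right_mono)
    finally have "\<bar>sin (pi * al s)\<bar>^2 \<le> (4 * al s)^2" by (rule power_mono) simp
    then show ?thesis by (simp add: power_mult_distrib)
  qed
  moreover have "et s * (real k - al s) \<le> 32 * al s * real s"
  proof -
    have "et s \<le> 2 * pi^2 * al s" by (rule et_le)
    also have "\<dots> \<le> 32 * al s"
    proof -
      have "pi^2 \<le> 4^2" by (rule power_mono) (use pi_less_4 in auto)
      then show ?thesis using al by simp
    qed
    finally have e: "et s \<le> 32 * al s" .
    have "et s * (real k - al s) \<le> et s * real s" using assms et_pos[of s] al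
      by (intro mult_left_mono) auto
    also have "\<dots> \<le> 32 * al s * real s" using e by (intro mult_right_mono) auto
    finally show ?thesis .
  qed
  ultimately show ?thesis unfolding g1_def by linarith
qed

definition tau :: "nat \<Rightarrow> real" where "tau s = 1 / (32 * (real s + 2))"

lemma tau_pos: "0 < tau s" unfolding tau_def by simp

lemma trap_ineq: "16 * (al s)^2 + 32 * al s * real s < 2 * tau s"
proof -
  define q where "q = real s + 2"
  have q: "q \<ge> 2" unfolding q_def by simp
  have a0: "al s = 1 / (1000 * q^2)" unfolding al_def q_def by simp
  have alq: "al s * q = 1 / (1000 * q)" unfolding a0 using q by (simp add: power2_eq_square field_simps)
  have al: "0 < al s" "al s \<le> 1/4000" using al_pos al_le by auto
  have "16 * (al s)^2 \<le> al s * q"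
  proof -
    have "16 * (al s)^2 = al s * (16 * al s)" by (simp add: power2_eq_square)
    also have "\<dots> \<le> al s * q" using al q by (intro mult_left_mono) auto
    finally show ?thesis .
  qed
  moreover have "32 * al s * real s \<le> 32 * (al s * q)" using al unfolding q_def by (simp add: algebra_simps)
  moreover have "2 * tau s = 1 / (16 * q)" unfolding tau_def q_def by (simp add: field_simps)
  moreover have "62.5 * (al s * q) = 1 / (16 * q)" unfolding alq using q by simp
  moreover have "al s * q > 0" using al q by simp
  ultimately show ?thesis by linarith
qed

lemma Wd_face_lo: "Wd s (mm s - 1/2) = - 3/8 * KK s"
  using Wd_g2[of s "mm s - 1/2"] unfolding mm_def g2_def by (simp add: power2_eq_square)

lemma Wd_face_hi: "Wd s (mm s + 1/2) = 5/8 * KK s"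
  using Wd_g2[of s "mm s + 1/2"] unfolding mm_def g2_def by (simp add: power2_eq_square)

definition Gam :: "nat \<Rightarrow> (nat \<Rightarrow> nat \<Rightarrow> real) \<Rightarrow> real" where
  "Gam n \<gamma> = Max (Rrow n \<gamma> ` {1..n})"

definition vtx :: "nat \<Rightarrow> (nat \<Rightarrow> nat \<Rightarrow> real) \<Rightarrow> nat" where
  "vtx n \<gamma> = (SOME v. v \<in> {1..n} \<and> Rrow n \<gamma> v = Gam n \<gamma>)"

definition kap :: "nat \<Rightarrow> nat \<Rightarrow> (nat \<Rightarrow> nat \<Rightarrow> real) \<Rightarrow> real" where
  "kap s n \<gamma> = tau s / Gam n \<gamma>"

lemma graph_facts:
  assumes "(n, \<gamma>) \<in> graphs"
  shows "2 \<le> n" "\<forall>a\<in>{1..n}. \<forall>b\<in>{1..n}. \<gamma> a b = \<gamma> b a"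
    "0 < Gam n \<gamma>" "vtx n \<gamma> \<in> {1..n}" "Rrow n \<gamma> (vtx n \<gamma>) = Gam n \<gamma>"
    "\<And>i. i \<in> {1..n} \<Longrightarrow> Rrow n \<gamma> i \<le> Gam n \<gamma>"
proof -
  show n2: "2 \<le> n" and sym: "\<forall>a\<in>{1..n}. \<forall>b\<in>{1..n}. \<gamma> a b = \<gamma> b a"
    using assms unfolding graphs_def by auto
  have con: "connected_weighted n \<gamma>" using assms unfolding graphs_def by auto
  define rel where "rel = {(a, b). a \<in> {1..n} \<and> b \<in> {1..n} \<and> a \<noteq> b \<and> \<gamma> a b \<noteq> 0}"
  have "(1, 2) \<in> rel\<^sup>*" using con n2 unfolding connected_weighted_def rel_def by auto
  then obtain c where c: "(1, c) \<in> rel"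
    by (cases rule: converse_rtranclE) auto
  then have c1: "c \<in> {1..n} - {1}" "\<gamma> 1 c \<noteq> 0" unfolding rel_def by auto
  have fin: "finite ({1..n} - {1::nat})" by simp
  have "0 < \<bar>\<gamma> 1 c\<bar>" using c1 by simp
  also have "\<bar>\<gamma> 1 c\<bar> \<le> Rrow n \<gamma> 1" unfolding Rrow_def
    by (rule member_le_sum[OF c1(1)]) (auto simp: fin)
  finally have R1: "0 < Rrow n \<gamma> 1" .
  have ne: "Rrow n \<gamma> ` {1..n} \<noteq> {}" using n2 by auto
  show le: "\<And>i. i \<in> {1..n} \<Longrightarrow> Rrow n \<gamma> i \<le> Gam n \<gamma>"
    unfolding Gam_def by (rule Max_ge) auto
  show "0 < Gam n \<gamma>" using le[of 1] R1 n2 by auto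
  have "Gam n \<gamma> \<in> Rrow n \<gamma> ` {1..n}" unfolding Gam_def by (rule Max_in) (use ne in auto)
  then have "\<exists>v. v \<in> {1..n} \<and> Rrow n \<gamma> v = Gam n \<gamma>" by auto
  then have "vtx n \<gamma> \<in> {1..n} \<and> Rrow n \<gamma> (vtx n \<gamma>) = Gam n \<gamma>"
    unfolding vtx_def by (rule someI_ex)
  then show "vtx n \<gamma> \<in> {1..n}" "Rrow n \<gamma> (vtx n \<gamma>) = Gam n \<gamma>" by auto
qed

lemma WW_cont: "continuous_on UNIV (WW s)"
  by (rule continuous_at_imp_continuous_on) (use WW_deriv DERIV_isCont in blast)

lemma kap_pos: "(n, \<gamma>) \<in> graphs \<Longrightarrow> 0 < kap s n \<gamma>"
  unfolding kap_def using tau_pos graph_facts(3) by simp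

lemma kap_Gam: "(n, \<gamma>) \<in> graphs \<Longrightarrow> kap s n \<gamma> * Gam n \<gamma> = tau s"
  unfolding kap_def using graph_facts(3)[of n \<gamma>] by simp

lemma cf_small:
  assumes g: "(n, \<gamma>) \<in> graphs" and i: "i \<in> {1..n}" and b: "\<forall>j\<in>{1..n}. \<bar>y j\<bar> \<le> mm s + 1/2"
  shows "\<bar>cf n \<gamma> (kap s n \<gamma>) y i\<bar> \<le> 1/4"
proof -
  let ?k = "kap s n \<gamma>" and ?M = "mm s + 1/2"
  have k: "0 < ?k" using kap_pos[OF g] .
  have "\<bar>cf n \<gamma> ?k y i\<bar> \<le> 4 * ?k * ?M * Rrow n \<gamma> i" by (rule cf_bound[OF i b]) (use k in simp)
  also have "\<dots> = 4 * ?M * (?k * Rrow n \<gamma> i)" by (simp add: algebra_simps)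
  also have "\<dots> \<le> 4 * ?M * (?k * Gam n \<gamma>)"
    using graph_facts(6)[OF g i] k mm_pos[of s] by (intro mult_left_mono) auto
  also have "\<dots> = 4 * ?M * tau s" using kap_Gam[OF g] by simp
  also have "\<dots> \<le> 1/4"
  proof -
    have M: "?M \<le> real s + 3" unfolding mm_def X0_def using al_le[of s] by simp
    have "4 * ?M * tau s \<le> 4 * (real s + 3) * tau s"
      using M tau_pos[of s] by (intro mult_right_mono) auto
    also have "\<dots> = (real s + 3) / (8 * (real s + 2))" unfolding tau_def by (simp add: field_simps)
    also have "\<dots> \<le> 1/4" by (simp add: field_simps)
    finally show ?thesis .
  qed
  finally show ?thesis .
qed

lemma slice_at:
  assumes g: "(n, \<gamma>) \<in> graphs" and i: "i \<in> {1..n}"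
  shows "((\<lambda>t. energy (WW s) n \<gamma> \<kappa> (x(i:=t))) has_real_derivative (Wd s (x i) + cf n \<gamma> \<kappa> x i)) (at (x i))"
  using energy_slice_deriv[where \<kappa>=\<kappa> and x=x and t="x i", OF graph_facts(2)[OF g] i WW_deriv] by simp

lemma box_bound:
  assumes "x \<in> boxset n lo hi" "\<forall>j\<in>{1..n}. - (mm s + 1/2) \<le> lo j \<and> hi j \<le> mm s + 1/2"
  shows "\<forall>j\<in>{1..n}. \<bar>x j\<bar> \<le> mm s + 1/2"
  using assms unfolding boxset_def by force

lemma well_face:
  assumes g: "(n, \<gamma>) \<in> graphs" and x: "x \<in> boxset n lo hi"
    and b: "\<forall>j\<in>{1..n}. \<bar>x j\<bar> \<le> mm s + 1/2" and i: "i \<in> {1..n}"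
    and c: "c = 1 \<or> c = -1" and lo: "lo i = c * mm s - 1/2" and hi: "hi i = c * mm s + 1/2"
  shows "x i = lo i \<Longrightarrow> \<exists>t. lo i < t \<and> t < hi i \<and> energy (WW s) n \<gamma> (kap s n \<gamma>) (x(i:=t)) < energy (WW s) n \<gamma> (kap s n \<gamma>) x"
    and "x i = hi i \<Longrightarrow> \<exists>t. lo i < t \<and> t < hi i \<and> energy (WW s) n \<gamma> (kap s n \<gamma>) (x(i:=t)) < energy (WW s) n \<gamma> (kap s n \<gamma>) x"
proof -
  let ?E = "energy (WW s) n \<gamma> (kap s n \<gamma>)"
  have cfb: "\<bar>cf n \<gamma> (kap s n \<gamma>) x i\<bar> \<le> 1/4" by (rule cf_small[OF g i b])
  have D: "((\<lambda>t. ?E (x(i:=t))) has_real_derivative (Wd s (x i) + cf n \<gamma> (kap s n \<gamma>) x i)) (at (x i))"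
    by (rule slice_at[OF g i])
  have K: "1 \<le> KK s" by (rule KK_ge)
  have lh: "lo i < hi i" using lo hi by simp
  have xx: "x(i := x i) = x" by simp
  {
    assume xi: "x i = lo i"
    have "Wd s (x i) \<le> - 3/8"
      using c
    proof
      assume "c = 1"
      then show ?thesis using xi lo Wd_face_lo[of s] K by simp
    next
      assume "c = -1"
      then have "x i = - (mm s + 1/2)" using xi lo by simp
      then show ?thesis using Wd_odd[of s "mm s + 1/2"] Wd_face_hi[of s] K by simp
    qed
    then have "Wd s (x i) + cf n \<gamma> (kap s n \<gamma>) x i < 0" using cfb by linarith
    from exists_lower_right[OF D this, of "hi i"] xi lh xx
    show "\<exists>t. lo i < t \<and> t < hi i \<and> ?E (x(i:=t)) < ?E x" by metis
  }
  {
    assume xi: "x i = hi i"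
    have "Wd s (x i) \<ge> 3/8"
      using c
    proof
      assume "c = 1"
      then show ?thesis using xi hi Wd_face_hi[of s] K by simp
    next
      assume "c = -1"
      then have "x i = - (mm s - 1/2)" using xi hi by simp
      then show ?thesis using Wd_odd[of s "mm s - 1/2"] Wd_face_lo[of s] K by simp
    qed
    then have "Wd s (x i) + cf n \<gamma> (kap s n \<gamma>) x i > 0" using cfb by linarith
    from exists_lower_left[OF D this, of "lo i"] xi lh xx
    show "\<exists>t. lo i < t \<and> t < hi i \<and> ?E (x(i:=t)) < ?E x" by metis
  }
qed

definition sgA :: "nat set \<Rightarrow> nat \<Rightarrow> real" where "sgA A i = (if i \<in> A then 1 else -1)"

lemma old_min:
  assumes g: "(n, \<gamma>) \<in> graphs"
  shows "\<exists>P. is_local_min n (energy (WW s) n \<gamma> (kap s n \<gamma>)) P \<and>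
     (\<forall>i\<in>{1..n}. sgA A i * mm s - 1/2 < P i \<and> P i < sgA A i * mm s + 1/2)"
proof -
  define lo where "lo i = sgA A i * mm s - 1/2" for i
  define hi where "hi i = sgA A i * mm s + 1/2" for i
  have n: "1 \<le> n" using graph_facts(1)[OF g] by simp
  have bd: "\<forall>j\<in>{1..n}. - (mm s + 1/2) \<le> lo j \<and> hi j \<le> mm s + 1/2"
    unfolding lo_def hi_def sgA_def using mm_pos[of s] by auto
  have c: "sgA A i = 1 \<or> sgA A i = -1" for i unfolding sgA_def by auto
  have "\<exists>P. is_local_min n (energy (WW s) n \<gamma> (kap s n \<gamma>)) P \<and> (\<forall>i\<in>{1..n}. lo i < P i \<and> P i < hi i)"
  proof (rule box_min[OF n])
    show "\<forall>i\<in>{1..n}. lo i < hi i" unfolding lo_def hi_def by auto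
    show "continuous_on UNIV (energy (WW s) n \<gamma> (kap s n \<gamma>))" by (rule energy_cont[OF WW_cont])
  next
    fix x i assume x: "x \<in> boxset n lo hi" and i: "i \<in> {1..n}" and xi: "x i = lo i"
    show "\<exists>t. lo i < t \<and> t < hi i \<and> energy (WW s) n \<gamma> (kap s n \<gamma>) (x(i:=t)) < energy (WW s) n \<gamma> (kap s n \<gamma>) x"
      by (rule well_face(1)[OF g x box_bound[OF x bd] i c[of i]]) (auto simp: lo_def hi_def xi)
  next
    fix x i assume x: "x \<in> boxset n lo hi" and i: "i \<in> {1..n}" and xi: "x i = hi i"
    show "\<exists>t. lo i < t \<and> t < hi i \<and> energy (WW s) n \<gamma> (kap s n \<gamma>) (x(i:=t)) < energy (WW s) n \<gamma> (kap s n \<gamma>) x"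
      by (rule well_face(2)[OF g x box_bound[OF x bd] i c[of i]]) (auto simp: lo_def hi_def xi)
  qed
  then show ?thesis unfolding lo_def hi_def .
qed

definition sgm :: "(nat \<Rightarrow> nat \<Rightarrow> real) \<Rightarrow> nat \<Rightarrow> nat \<Rightarrow> real" where
  "sgm \<gamma> v j = (if \<gamma> v j > 0 then -1 else 1)"

lemma cf_trap_lower:
  assumes g: "(n, \<gamma>) \<in> graphs" and v: "v = vtx n \<gamma>"
    and t: "0 \<le> x v" "x v \<le> real s"
    and xs: "\<forall>j\<in>{1..n} - {v}. sgm \<gamma> v j * mm s - 1/2 \<le> x j \<and> x j \<le> sgm \<gamma> v j * mm s + 1/2"
  shows "cf n \<gamma> (kap s n \<gamma>) x v \<ge> 2 * tau s"
proof -
  have vn: "v \<in> {1..n}" using graph_facts(4)[OF g] v by simp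
  define L where "L = mm s - x v - 1/2"
  have L: "1 \<le> L" unfolding L_def mm_def X0_def using t al_pos[of s] by simp
  have "(\<Sum>j=1..n. \<gamma> v j * (x v - x j)) = \<gamma> v v * (x v - x v) + (\<Sum>j\<in>{1..n} - {v}. \<gamma> v j * (x v - x j))"
    using vn by (subst sum.remove[of _ v]) auto
  then have eq: "(\<Sum>j=1..n. \<gamma> v j * (x v - x j)) = (\<Sum>j\<in>{1..n} - {v}. \<gamma> v j * (x v - x j))" by simp
  have "(\<Sum>j\<in>{1..n} - {v}. \<bar>\<gamma> v j\<bar> * L) \<le> (\<Sum>j\<in>{1..n} - {v}. \<gamma> v j * (x v - x j))"
  proof (rule sum_mono)
    fix j assume j: "j \<in> {1..n} - {v}"
    show "\<bar>\<gamma> v j\<bar> * L \<le> \<gamma> v j * (x v - x j)"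
    proof (cases "\<gamma> v j > 0")
      case True
      then have "x j \<le> - mm s + 1/2" using xs j unfolding sgm_def by force
      then have "L \<le> x v - x j" unfolding L_def using t by simp
      then show ?thesis using True by (simp add: mult_left_mono)
    next
      case False
      then have "x j \<ge> mm s - 1/2" using xs j unfolding sgm_def by force
      then have "x v - x j \<le> - L" unfolding L_def by simp
      then have "\<gamma> v j * (- L) \<le> \<gamma> v j * (x v - x j)" using False
        by (intro mult_left_mono_neg) auto
      then show ?thesis using False by simp
    qed
  qed
  moreover have "(\<Sum>j\<in>{1..n} - {v}. \<bar>\<gamma> v j\<bar> * L) = Rrow n \<gamma> v * L"
    unfolding Rrow_def by (simp add: sum_distrib_right)
  moreover have "Rrow n \<gamma> v * L \<ge> Rrow n \<gamma> v"
    using L graph_facts(3,5)[OF g] v by simp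
  ultimately have "(\<Sum>j=1..n. \<gamma> v j * (x v - x j)) \<ge> Gam n \<gamma>"
    using eq graph_facts(5)[OF g] v by simp
  then have "2 * kap s n \<gamma> * (\<Sum>j=1..n. \<gamma> v j * (x v - x j)) \<ge> 2 * kap s n \<gamma> * Gam n \<gamma>"
    using kap_pos[OF g, of s] by (intro mult_left_mono) auto
  then show ?thesis unfolding cf_def using kap_Gam[OF g] by simp
qed

lemma new_min:
  assumes g: "(n, \<gamma>) \<in> graphs" and k: "1 \<le> k" "k \<le> s"
  shows "\<exists>Q. is_local_min n (energy (WW s) n \<gamma> (kap s n \<gamma>)) Q \<and>
     real k - 1/2 < Q (vtx n \<gamma>) \<and> Q (vtx n \<gamma>) < real k - al s"
proof -
  define v where "v = vtx n \<gamma>"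
  have vn: "v \<in> {1..n}" using graph_facts(4)[OF g] v_def by simp
  let ?E = "energy (WW s) n \<gamma> (kap s n \<gamma>)"
  define lo where "lo j = (if j = v then real k - 1/2 else sgm \<gamma> v j * mm s - 1/2)" for j
  define hi where "hi j = (if j = v then real k - al s else sgm \<gamma> v j * mm s + 1/2)" for j
  have n: "1 \<le> n" using graph_facts(1)[OF g] by simp
  have al: "0 < al s" "al s \<le> 1/4000" using al_pos al_le by auto
  have mmv: "mm s = real s + 3/2 + al s" unfolding mm_def X0_def by simp
  have bd: "\<forall>j\<in>{1..n}. - (mm s + 1/2) \<le> lo j \<and> hi j \<le> mm s + 1/2"
    unfolding lo_def hi_def sgm_def using mm_pos[of s] k al mmv by auto
  have c: "sgm \<gamma> v i = 1 \<or> sgm \<gamma> v i = -1" for i unfolding sgm_def by auto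
  have lohi: "\<forall>i\<in>{1..n}. lo i < hi i" unfolding lo_def hi_def using al by auto
  have faces: "\<exists>t. lo i < t \<and> t < hi i \<and> ?E (x(i:=t)) < ?E x"
    if x: "x \<in> boxset n lo hi" and i: "i \<in> {1..n}" and xi: "x i = lo i \<or> x i = hi i" for x i
  proof (cases "i = v")
    case False
    have b: "\<forall>j\<in>{1..n}. \<bar>x j\<bar> \<le> mm s + 1/2" by (rule box_bound[OF x bd])
    have L: "lo i = sgm \<gamma> v i * mm s - 1/2" "hi i = sgm \<gamma> v i * mm s + 1/2"
      using False by (auto simp: lo_def hi_def)
    show ?thesis using xi
    proof
      assume xl: "x i = lo i"
      show ?thesis by (rule well_face(1)[OF g x b i c[of i] L xl])
    next
      assume xh: "x i = hi i"
      show ?thesis by (rule well_face(2)[OF g x b i c[of i] L xh])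
    qed
  next
    case True
    have b: "\<forall>j\<in>{1..n}. \<bar>x j\<bar> \<le> mm s + 1/2" by (rule box_bound[OF x bd])
    have cfb: "\<bar>cf n \<gamma> (kap s n \<gamma>) x i\<bar> \<le> 1/4" by (rule cf_small[OF g i b])
    have D: "((\<lambda>t. ?E (x(i:=t))) has_real_derivative (Wd s (x i) + cf n \<gamma> (kap s n \<gamma>) x i)) (at (x i))"
      by (rule slice_at[OF g i])
    have xx: "x(i := x i) = x" by simp
    have lh: "lo i < hi i" using lohi i by blast
    show ?thesis using xi
    proof
      assume xl: "x i = lo i"
      then have "x i = real k - 1/2" using True lo_def by simp
      then have "Wd s (x i) \<le> -1" using Wd_trap_lo[OF k] by simp
      then have "Wd s (x i) + cf n \<gamma> (kap s n \<gamma>) x i < 0" using cfb by linarith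
      from exists_lower_right[OF D this, of "hi i"] xl lh xx
      show ?thesis by metis
    next
      assume xh: "x i = hi i"
      then have xv: "x v = real k - al s" using True hi_def by simp
      have xs: "\<forall>j\<in>{1..n} - {v}. sgm \<gamma> v j * mm s - 1/2 \<le> x j \<and> x j \<le> sgm \<gamma> v j * mm s + 1/2"
        using x unfolding boxset_def lo_def hi_def by auto
      have "cf n \<gamma> (kap s n \<gamma>) x v \<ge> 2 * tau s"
        by (rule cf_trap_lower[OF g v_def]) (use xv k al xs in auto)
      moreover have "Wd s (x v) \<ge> - (16 * (al s)^2 + 32 * al s * real s)"
        using Wd_trap_hi[OF k] xv by simp
      ultimately have "Wd s (x i) + cf n \<gamma> (kap s n \<gamma>) x i > 0"
        using trap_ineq[of s] True by simp
      from exists_lower_left[OF D this, of "lo i"] xh lh xx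
      show ?thesis by metis
    qed
  qed
  have "\<exists>P. is_local_min n ?E P \<and> (\<forall>i\<in>{1..n}. lo i < P i \<and> P i < hi i)"
  proof (rule box_min[OF n lohi])
    show "continuous_on UNIV ?E" by (rule energy_cont[OF WW_cont])
  qed (use faces in blast)+
  then obtain P where P: "is_local_min n ?E P" "\<forall>i\<in>{1..n}. lo i < P i \<and> P i < hi i" by blast
  then have "lo v < P v" "P v < hi v" using vn by auto
  then show ?thesis using P(1) unfolding lo_def hi_def v_def by auto
qed

lemma lm0_subset:
  "{x. is_local_min n (energy (WW s) n \<gamma> 0) x} \<subseteq>
     (\<lambda>A i. if i \<in> {1..n} then sgA A i * mm s else 0) ` Pow {1..n}"
proof
  fix x assume "x \<in> {x. is_local_min n (energy (WW s) n \<gamma> 0) x}"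
  then have lm: "is_local_min n (energy (WW s) n \<gamma> 0) x" by simp
  then have xp: "x \<in> pts n" unfolding is_local_min_def by simp
  define A where "A = {i\<in>{1..n}. x i = mm s}"
  have "x = (\<lambda>i. if i \<in> {1..n} then sgA A i * mm s else 0)"
  proof
    fix i
    show "x i = (if i \<in> {1..n} then sgA A i * mm s else 0)"
    proof (cases "i \<in> {1..n}")
      case True
      then have "x i = mm s \<or> x i = - mm s" by (rule local_min_kappa0[OF lm])
      then show ?thesis using True mm_pos[of s] unfolding A_def sgA_def by auto
    next
      case False
      then show ?thesis using xp unfolding pts_def by auto
    qed
  qed
  moreover have "A \<in> Pow {1..n}" unfolding A_def by auto
  ultimately show "x \<in> (\<lambda>A i. if i \<in> {1..n} then sgA A i * mm s else 0) ` Pow {1..n}" by blast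
qed

lemma lm0_card:
  "finite {x. is_local_min n (energy (WW s) n \<gamma> 0) x} \<and>
   card {x. is_local_min n (energy (WW s) n \<gamma> 0) x} \<le> 2 ^ n"
proof -
  let ?T = "(\<lambda>A i. if i \<in> {1..n} then sgA A i * mm s else 0) ` Pow {1..n::nat}"
  have "finite ?T" by simp
  moreover have "card ?T \<le> 2 ^ n"
    using card_image_le[of "Pow {1..n}" "\<lambda>A i. if i \<in> {1..n} then sgA A i * mm s else 0"]
    by (simp add: card_Pow)
  moreover note sub = lm0_subset[of n s \<gamma>]
  ultimately have "finite {x. is_local_min n (energy (WW s) n \<gamma> 0) x}"
    and "card {x. is_local_min n (energy (WW s) n \<gamma> 0) x} \<le> card ?T"
    using finite_subset card_mono by blast+
  then show ?thesis using \<open>card ?T \<le> 2 ^ n\<close> by simp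
qed

lemma lm_kappa_card:
  assumes g: "(n, \<gamma>) \<in> graphs"
  shows "finite {x. is_local_min n (energy (WW s) n \<gamma> (kap s n \<gamma>)) x} \<longrightarrow>
     2 ^ n + 2 * s \<le> card {x. is_local_min n (energy (WW s) n \<gamma> (kap s n \<gamma>)) x}"
proof
  let ?E = "energy (WW s) n \<gamma> (kap s n \<gamma>)"
  let ?L = "{x. is_local_min n ?E x}"
  assume fin: "finite ?L"
  define v where "v = vtx n \<gamma>"
  have vn: "v \<in> {1..n}" using graph_facts(4)[OF g] v_def by simp
  have al: "0 < al s" "al s \<le> 1/4000" using al_pos al_le by auto
  have mmv: "mm s = real s + 3/2 + al s" unfolding mm_def X0_def by simp
  have "\<forall>A. \<exists>P. is_local_min n ?E P \<and> (\<forall>i\<in>{1..n}. sgA A i * mm s - 1/2 < P i \<and> P i < sgA A i * mm s + 1/2)"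
    using old_min[OF g] by blast
  from choice[OF this] obtain P where P0: "\<forall>A. is_local_min n ?E (P A) \<and>
      (\<forall>i\<in>{1..n}. sgA A i * mm s - 1/2 < P A i \<and> P A i < sgA A i * mm s + 1/2)"
    by blast
  have P: "\<And>A. is_local_min n ?E (P A)"
    "\<And>A i. i \<in> {1..n} \<Longrightarrow> sgA A i * mm s - 1/2 < P A i \<and> P A i < sgA A i * mm s + 1/2"
    using P0 by blast+
  have "\<forall>k. \<exists>Q. k \<in> {1..s} \<longrightarrow> (is_local_min n ?E Q \<and> real k - 1/2 < Q v \<and> Q v < real k - al s)"
  proof
    fix k
    show "\<exists>Q. k \<in> {1..s} \<longrightarrow> (is_local_min n ?E Q \<and> real k - 1/2 < Q v \<and> Q v < real k - al s)"
    proof (cases "k \<in> {1..s}")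
      case True
      then show ?thesis using new_min[OF g, of k s] unfolding v_def by auto
    qed auto
  qed
  from choice[OF this] obtain Q where Q0: "\<forall>k. k \<in> {1..s} \<longrightarrow>
      (is_local_min n ?E (Q k) \<and> real k - 1/2 < Q k v \<and> Q k v < real k - al s)"
    by blast
  have Q: "\<And>k. k \<in> {1..s} \<Longrightarrow> is_local_min n ?E (Q k)"
    "\<And>k. k \<in> {1..s} \<Longrightarrow> real k - 1/2 < Q k v \<and> Q k v < real k - al s"
    using Q0 by blast+
  define N where "N k = (\<lambda>i. - Q k i)" for k
  have N: "\<And>k. k \<in> {1..s} \<Longrightarrow> is_local_min n ?E (N k)"
    unfolding N_def by (rule local_min_neg[OF WW_even Q(1)])
  define S1 where "S1 = P ` Pow {1..n}"
  define S2 where "S2 = Q ` {1..s}"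
  define S3 where "S3 = N ` {1..s}"
  have sub: "S1 \<union> S2 \<union> S3 \<subseteq> ?L" unfolding S1_def S2_def S3_def using P(1) Q(1) N by auto
  have m2: "mm s > 1/2" unfolding mmv using al by simp
  have Ppos: "A \<subseteq> {1..n} \<Longrightarrow> i \<in> {1..n} \<Longrightarrow> (P A i > 0 \<longleftrightarrow> i \<in> A)" for A i
  proof -
    assume i: "i \<in> {1..n}"
    have b: "sgA A i * mm s - 1/2 < P A i" "P A i < sgA A i * mm s + 1/2" using P(2)[OF i, of A] by auto
    show ?thesis
    proof (cases "i \<in> A")
      case True
      then have "sgA A i = 1" unfolding sgA_def by simp
      then show ?thesis using b m2 True by simp
    next
      case False
      then have "sgA A i = -1" unfolding sgA_def by simp
      then show ?thesis using b m2 False by simp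
    qed
  qed
  have injP: "inj_on P (Pow {1..n})"
  proof
    fix A B assume A: "A \<in> Pow {1..n}" and B: "B \<in> Pow {1..n}" and e: "P A = P B"
    show "A = B"
    proof (intro set_eqI iffI)
      fix i assume "i \<in> A"
      then have "i \<in> {1..n}" "P A i > 0" using A Ppos[of A i] by auto
      then show "i \<in> B" using e B Ppos[of B i] by auto
    next
      fix i assume "i \<in> B"
      then have "i \<in> {1..n}" "P B i > 0" using B Ppos[of B i] by auto
      then show "i \<in> A" using e A Ppos[of A i] by auto
    qed
  qed
  have injQ: "inj_on Q {1..s}"
  proof
    fix k l assume k: "k \<in> {1..s}" and l: "l \<in> {1..s}" and e: "Q k = Q l"
    have "real k - 1/2 < real l - al s" "real l - 1/2 < real k - al s"
      using Q(2)[OF k] Q(2)[OF l] e by auto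
    then have "real k < real l + 1" "real l < real k + 1" using al by auto
    then show "k = l" by linarith
  qed
  have injN: "inj_on N {1..s}"
  proof
    fix k l assume k: "k \<in> {1..s}" and l: "l \<in> {1..s}" and e: "N k = N l"
    have "Q k = Q l"
    proof
      fix i
      have "N k i = N l i" using e by simp
      then show "Q k i = Q l i" unfolding N_def by simp
    qed
    then show "k = l" using inj_onD[OF injQ _ k l] by blast
  qed
  have Qv: "k \<in> {1..s} \<Longrightarrow> 0 < Q k v \<and> Q k v < mm s - 1/2" for k
  proof -
    assume k: "k \<in> {1..s}"
    have q: "real k - 1/2 < Q k v" "Q k v < real k - al s" using Q(2)[OF k] by auto
    have "real k \<le> real s" "1 \<le> real k" using k by auto
    then show ?thesis unfolding mmv using al q by linarith
  qed
  have d12: "S1 \<inter> S2 = {}"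
  proof (rule ccontr)
    assume "S1 \<inter> S2 \<noteq> {}"
    then obtain A k where A: "A \<subseteq> {1..n}" and k: "k \<in> {1..s}" and e: "P A = Q k"
      unfolding S1_def S2_def by blast
    have pv: "P A v = Q k v" using e by simp
    have qk: "0 < Q k v" "Q k v < mm s - 1/2" using Qv[OF k] by auto
    have "P A v > 0" using pv qk by linarith
    then have "v \<in> A" using Ppos[OF A vn] by simp
    then have "P A v > mm s - 1/2" using P(2)[OF vn, of A] unfolding sgA_def by simp
    then show False using pv qk by linarith
  qed
  have d13: "S1 \<inter> S3 = {}"
  proof (rule ccontr)
    assume "S1 \<inter> S3 \<noteq> {}"
    then obtain A k where A: "A \<subseteq> {1..n}" and k: "k \<in> {1..s}" and e: "P A = N k"
      unfolding S1_def S3_def by blast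
    have pv: "P A v = - Q k v" using e unfolding N_def by (simp add: fun_eq_iff)
    have qk: "0 < Q k v" "Q k v < mm s - 1/2" using Qv[OF k] by auto
    have "P A v < 0" using pv qk by linarith
    then have "v \<notin> A" using Ppos[OF A vn] by simp
    then have "P A v < - mm s + 1/2" using P(2)[OF vn, of A] unfolding sgA_def by simp
    then show False using pv qk by linarith
  qed
  have d23: "S2 \<inter> S3 = {}"
  proof (rule ccontr)
    assume "S2 \<inter> S3 \<noteq> {}"
    then obtain k l where k: "k \<in> {1..s}" and l: "l \<in> {1..s}" and e: "Q k = N l"
      unfolding S2_def S3_def by blast
    have "Q k v > 0" "N l v < 0" using Qv[OF k] Qv[OF l] unfolding N_def by auto
    moreover have "Q k v = N l v" using e by simp
    ultimately show False by linarith
  qed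
  have c1: "card S1 = 2 ^ n" unfolding S1_def using card_image[OF injP] by (simp add: card_Pow)
  have c2: "card S2 = s" unfolding S2_def using card_image[OF injQ] by simp
  have c3: "card S3 = s" unfolding S3_def using card_image[OF injN] by simp
  have f: "finite S1" "finite S2" "finite S3" unfolding S1_def S2_def S3_def by auto
  have "card (S1 \<union> S2 \<union> S3) = 2 ^ n + s + s"
  proof -
    have "card (S1 \<union> S2) = 2 ^ n + s" using card_Un_disjoint[OF f(1,2) d12] c1 c2 by simp
    moreover have "(S1 \<union> S2) \<inter> S3 = {}" using d13 d23 by auto
    ultimately show ?thesis using card_Un_disjoint[of "S1 \<union> S2" S3] f c3 by simp
  qed
  moreover have "card (S1 \<union> S2 \<union> S3) \<le> card ?L" by (rule card_mono[OF fin sub])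
  ultimately show "2 ^ n + 2 * s \<le> card ?L" by simp
qed

lemma C_graph_ge:
  assumes g: "(n, \<gamma>) \<in> graphs"
  shows "ereal (real (2 * s)) \<le> C_graph n \<gamma> (WW s)"
proof -
  let ?k = "kap s n \<gamma>"
  have k0: "?k \<in> {0..}" using kap_pos[OF g, of s] by simp
  have "ereal (real (2 * s)) \<le> num_min (WW s) n \<gamma> ?k - num_min (WW s) n \<gamma> 0"
  proof -
    let ?L = "{x. is_local_min n (energy (WW s) n \<gamma> ?k) x}"
    let ?Lz = "{x. is_local_min n (energy (WW s) n \<gamma> 0) x}"
    have n0: "num_min (WW s) n \<gamma> 0 = ereal (real (card ?Lz))"
      unfolding num_min_def Let_def using lm0_card[of n s \<gamma>] by simp
    have c0: "card ?Lz \<le> 2 ^ n" using lm0_card[of n s \<gamma>] by simp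
    show ?thesis
    proof (cases "finite ?L")
      case True
      then have nk: "num_min (WW s) n \<gamma> ?k = ereal (real (card ?L))"
        unfolding num_min_def Let_def by simp
      have "2 ^ n + 2 * s \<le> card ?L" using lm_kappa_card[OF g] True by blast
      then have "real (2 * s) \<le> real (card ?L) - real (card ?Lz)" using c0 by linarith
      then show ?thesis unfolding nk n0 by simp
    next
      case False
      then have nk: "num_min (WW s) n \<gamma> ?k = \<infinity>"
        unfolding num_min_def Let_def by simp
      then show ?thesis unfolding nk n0 by simp
    qed
  qed
  also have "\<dots> \<le> C_graph n \<gamma> (WW s)"
    unfolding C_graph_def by (rule SUP_upper[OF k0])
  finally show ?thesis .
qed

theorem mainTheorem4:
  shows "\<forall>s::nat. \<exists>W. W \<in> Wclass_s (2 * s + 1) \<and> C_pot W \<ge> ereal (real (2 * s))"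
proof
  fix s :: nat
  have "C_pot (WW s) \<ge> ereal (real (2 * s))"
    unfolding C_pot_def
  proof (rule INF_greatest)
    fix g assume "g \<in> graphs"
    then have "(fst g, snd g) \<in> graphs" by simp
    then show "ereal (real (2 * s)) \<le> C_graph (fst g) (snd g) (WW s)" by (rule C_graph_ge)
  qed
  then show "\<exists>W. W \<in> Wclass_s (2 * s + 1) \<and> C_pot W \<ge> ereal (real (2 * s))"
    using WW_class[of s] by blast
qed

end
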